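(* Let $0<\varepsilon\le1$, $c=\sqrt{2\pi}\,\varepsilon/20$, let $\beta$ be a sufficiently large absolute constant, $\lambda=\max\{c^{-2},\beta^2\}$, and $d=np\ge\lambda n^{1/2}$. There exists a constant $\xi>0$ (independent of $\varepsilon$) such that for all sufficiently large $n$ the following holds. Let $v\in V_n$, let $\sigma_0\in\{-1,+1\}^{V_n}$ be any configuration with $\sum_{u\in V_n}\sigma_0(u)=\varphi(2c\sqrt n)$, and let $\Gamma\subseteq V_n\setminus\{v\}$ satisfy $\bigl||\Gamma|-d\bigr|\le d^{2/3}$. Then $$\mathbb{E}\bigl[X_2(v)\mid S_0=\sigma_0,\ N(v)=\Gamma\bigr]\ge\frac{|\Gamma|}{2}+\frac{\xi c}{7}\Bigl(\frac{d^3}{n}\Bigr)^{1/2},$$ where $X_2(v)=\sum_{u\in N(v)}\mathbf 1(S_1(u)=+1)$.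
   Context: $G(n,p)$ is the binomial random graph on $V_n=\{1,\dots,n\}$ and $N(v)$ denotes the neighbourhood of $v$ in it. Majority dynamics: $S_{t+1}(u)=\operatorname{sgn}(\sum_{w\in N(u)}S_t(w))$ if the sum is nonzero, else $S_{t+1}(u)=S_t(u)$. Here $S_0=\sigma_0$ denotes that the initial states are the fixed configuration $\sigma_0$; the randomness is that of the graph. $\varphi(x)=\min\{k\in\mathbb Z:k\ge x,\ k\equiv n\pmod 2\}$. *)

theory Defs
  imports Complex_Main
begin

definition Vn :: "nat \<Rightarrow> nat set" where
  "Vn n = {1..n}"

definition pairs :: "nat \<Rightarrow> nat set set" where
  "pairs n = {e. \<exists>u w. u \<in> Vn n \<and> w \<in> Vn n \<and> u \<noteq> w \<and> e = {u, w}}"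

definition graphs :: "nat \<Rightarrow> nat set set set" where
  "graphs n = Pow (pairs n)"

definition gnp_prob :: "nat \<Rightarrow> real \<Rightarrow> nat set set \<Rightarrow> real" where
  "gnp_prob n p E = p ^ card E * (1 - p) ^ (card (pairs n) - card E)"

definition nbhd :: "nat set set \<Rightarrow> nat \<Rightarrow> nat set" where
  "nbhd E u = {w. {u, w} \<in> E}"

definition maj_step :: "nat set set \<Rightarrow> (nat \<Rightarrow> int) \<Rightarrow> (nat \<Rightarrow> int)" where
  "maj_step E \<sigma> u = (let s = (\<Sum>w\<in>nbhd E u. \<sigma> w) in
      if s \<noteq> 0 then sgn s else \<sigma> u)"

definition state :: "nat set set \<Rightarrow> (nat \<Rightarrow> int) \<Rightarrow> nat \<Rightarrow> (nat \<Rightarrow> int)" where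
  "state E \<sigma>0 t = (maj_step E ^^ t) \<sigma>0"

definition X2 :: "nat set set \<Rightarrow> (nat \<Rightarrow> int) \<Rightarrow> nat \<Rightarrow> real" where
  "X2 E \<sigma>0 v = real (card {u \<in> nbhd E v. state E \<sigma>0 1 u = 1})"

definition gnp_P :: "nat \<Rightarrow> real \<Rightarrow> (nat set set \<Rightarrow> bool) \<Rightarrow> real" where
  "gnp_P n p A = (\<Sum>E\<in>{E\<in>graphs n. A E}. gnp_prob n p E)"

definition gnp_cond_exp :: "nat \<Rightarrow> real \<Rightarrow> (nat set set \<Rightarrow> real) \<Rightarrow> (nat set set \<Rightarrow> bool) \<Rightarrow> real" where
  "gnp_cond_exp n p f A =
     (\<Sum>E\<in>{E\<in>graphs n. A E}. gnp_prob n p E * f E) / gnp_P n p A"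

definition phi :: "nat \<Rightarrow> real \<Rightarrow> int" where
  "phi n x = (THE k::int. real_of_int k \<ge> x \<and> k mod 2 = int n mod 2 \<and>
      (\<forall>j::int. real_of_int j \<ge> x \<and> j mod 2 = int n mod 2 \<longrightarrow> k \<le> j))"

end

theory Submission
  imports Defs
begin


definition binp :: "real \<Rightarrow> nat \<Rightarrow> nat \<Rightarrow> real" where
  "binp p N i = real (N choose i) * p ^ i * (1 - p) ^ (N - i)"

definition EB :: "real \<Rightarrow> nat \<Rightarrow> (nat \<Rightarrow> real) \<Rightarrow> real" where
  "EB p N f = (\<Sum>i\<le>N. binp p N i * f i)"

lemma binp_Suc_0: "binp p (Suc N) 0 = (1 - p) * binp p N 0"
  by (simp add: binp_def)

lemma binp_Suc_Suc: "binp p (Suc N) (Suc k) = p * binp p N k + (1 - p) * binp p N (Suc k)"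
proof (cases "k < N")
  case True
  have e: "(1 - p) ^ (N - k) = (1 - p) * (1 - p) ^ (N - Suc k)"
    using True by (metis Suc_diff_Suc power_Suc)
  show ?thesis unfolding binp_def using True
    by (simp add: e algebra_simps)
next
  case False
  then have "N choose Suc k = 0" by simp
  then show ?thesis unfolding binp_def using False
    by (simp add: algebra_simps)
qed

lemma binp_big: "i > N \<Longrightarrow> binp p N i = 0"
  by (simp add: binp_def)

lemma binp_nonneg: "0 \<le> p \<Longrightarrow> p \<le> 1 \<Longrightarrow> 0 \<le> binp p N i"
  by (simp add: binp_def)

lemma EB_Suc: "EB p (Suc N) f = p * EB p N (\<lambda>i. f (Suc i)) + (1 - p) * EB p N f"
proof -
  define S1 where "S1 = (\<Sum>k\<le>N. binp p N k * f (Suc k))"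
  define S2 where "S2 = (\<Sum>k\<le>N. binp p N (Suc k) * f (Suc k))"
  have h1: "EB p (Suc N) f = binp p (Suc N) 0 * f 0 + (\<Sum>k\<le>N. binp p (Suc N) (Suc k) * f (Suc k))"
    unfolding EB_def by (rule sum.atMost_Suc_shift)
  have "(\<Sum>k\<le>N. binp p (Suc N) (Suc k) * f (Suc k)) =
       (\<Sum>k\<le>N. p * (binp p N k * f (Suc k)) + (1 - p) * (binp p N (Suc k) * f (Suc k)))"
    by (rule sum.cong) (simp_all add: binp_Suc_Suc algebra_simps)
  also have "\<dots> = p * S1 + (1 - p) * S2"
    unfolding S1_def S2_def by (simp add: sum.distrib sum_distrib_left)
  finally have h2: "(\<Sum>k\<le>N. binp p (Suc N) (Suc k) * f (Suc k)) = p * S1 + (1 - p) * S2" .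
  have "EB p N f = (\<Sum>i\<le>Suc N. binp p N i * f i)"
    unfolding EB_def by (simp add: binp_big)
  also have "\<dots> = binp p N 0 * f 0 + S2"
    unfolding S2_def by (rule sum.atMost_Suc_shift)
  finally have h3: "EB p N f = binp p N 0 * f 0 + S2" .
  have h4: "EB p N (\<lambda>i. f (Suc i)) = S1" unfolding EB_def S1_def ..
  show ?thesis unfolding h1 h2 h3 h4 binp_Suc_0 by (simp add: algebra_simps)
qed


lemma EB_add: "EB p N (\<lambda>i. f i + g i) = EB p N f + EB p N g"
  unfolding EB_def by (simp add: sum.distrib algebra_simps)

lemma EB_cmult: "EB p N (\<lambda>i. c * f i) = c * EB p N f"
  unfolding EB_def by (simp add: sum_distrib_left algebra_simps)

lemma EB_diff: "EB p N (\<lambda>i. f i - g i) = EB p N f - EB p N g"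
  unfolding EB_def by (simp add: sum_subtractf algebra_simps)

lemma EB_mono: "0 \<le> p \<Longrightarrow> p \<le> 1 \<Longrightarrow> (\<And>i. i \<le> N \<Longrightarrow> f i \<le> g i) \<Longrightarrow> EB p N f \<le> EB p N g"
  unfolding EB_def by (intro sum_mono mult_left_mono) (auto simp: binp_nonneg)

lemma EB_nonneg: "0 \<le> p \<Longrightarrow> p \<le> 1 \<Longrightarrow> (\<And>i. i \<le> N \<Longrightarrow> 0 \<le> f i) \<Longrightarrow> 0 \<le> EB p N f"
  using EB_mono[of p N "\<lambda>_. 0" f] by (simp add: EB_def)

lemma EB_const: "EB p N (\<lambda>_. c) = c"
proof (induction N)
  case 0 then show ?case by (simp add: EB_def binp_def)
next
  case (Suc N) then show ?case by (simp add: EB_Suc algebra_simps)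
qed

lemma EB_id: "EB p N (\<lambda>i. real i) = real N * p"
proof (induction N)
  case 0 then show ?case by (simp add: EB_def binp_def)
next
  case (Suc N)
  have "EB p N (\<lambda>i. real (Suc i)) = EB p N (\<lambda>i. real i + 1)"
    by (rule arg_cong[where f="EB p N"]) auto
  also have "\<dots> = real N * p + 1" using Suc by (simp add: EB_add EB_const)
  finally show ?case using Suc by (simp add: EB_Suc algebra_simps)
qed

lemma EB_sq: "EB p N (\<lambda>i. (real i)^2) = real N * p * (1 - p) + (real N * p)^2"
proof (induction N)
  case 0 then show ?case by (simp add: EB_def binp_def)
next
  case (Suc N)
  have "EB p N (\<lambda>i. (real (Suc i))^2) = EB p N (\<lambda>i. (real i)^2 + (2 * real i + 1))"
    by (simp add: power2_eq_square algebra_simps)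
  also have "\<dots> = EB p N (\<lambda>i. (real i)^2) + (2 * (real N * p) + 1)"
    by (simp add: EB_add EB_const EB_cmult EB_id)
  finally show ?case using Suc by (simp add: EB_Suc power2_eq_square algebra_simps)
qed

lemma EB_var: "EB p N (\<lambda>i. (real i - real N * p)^2) = real N * p * (1 - p)"
proof -
  have "EB p N (\<lambda>i. (real i - real N * p)^2) =
     EB p N (\<lambda>i. (real i)^2 + ((-2 * (real N * p)) * real i + (real N * p)^2))"
    by (simp add: power2_eq_square algebra_simps)
  also have "\<dots> = EB p N (\<lambda>i. (real i)^2) + (EB p N (\<lambda>i. (-2 * (real N * p)) * real i) + (real N * p)^2)"
    by (simp only: EB_add EB_const)
  also have "\<dots> = real N * p * (1 - p)"
    by (simp only: EB_cmult EB_id EB_sq) (simp add: power2_eq_square algebra_simps)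
  finally show ?thesis .
qed

lemma EB_cheb:
  assumes p: "0 \<le> p" "p \<le> 1" and t: "t > 0"
  shows "EB p N (\<lambda>i. if \<bar>real i - real N * p\<bar> > t then 1 else 0) \<le> real N * p * (1 - p) / t^2"
proof -
  have "EB p N (\<lambda>i. if \<bar>real i - real N * p\<bar> > t then 1 else 0) \<le>
        EB p N (\<lambda>i. (real i - real N * p)^2 / t^2)"
  proof (rule EB_mono[OF p])
    fix i
    show "(if \<bar>real i - real N * p\<bar> > t then 1 else 0) \<le> (real i - real N * p)^2 / t^2"
    proof (cases "\<bar>real i - real N * p\<bar> > t")
      case True
      then have "t^2 \<le> (real i - real N * p)^2"
        using t by (metis abs_ge_zero abs_of_pos less_imp_le power2_abs power_mono)
      then show ?thesis using True t by simp
    qed simp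
  qed
  also have "\<dots> = EB p N (\<lambda>i. (real i - real N * p)^2) / t^2"
    using EB_cmult[of p N "1/t^2" "\<lambda>i. (real i - real N * p)^2"] by simp
  finally show ?thesis by (simp add: EB_var)
qed


lemma binp_step:
  assumes "i < N"
  shows "binp p N (Suc i) * (real (Suc i) * (1 - p)) = binp p N i * (real (N - i) * p)"
proof -
  have c: "real (Suc i) * real (N choose Suc i) = real (N - i) * real (N choose i)"
  proof -
    have "Suc i * (N choose Suc i) = (N - i) * (N choose i)"
      by (metis binomial_absorption binomial_absorb_comp)
    then show ?thesis by (metis of_nat_mult)
  qed
  have e: "(1 - p) ^ (N - i) = (1 - p) ^ (N - Suc i) * (1 - p)"
    using assms by (metis Suc_diff_Suc power_Suc mult.commute)
  have "binp p N (Suc i) * (real (Suc i) * (1 - p)) =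
     (real (Suc i) * real (N choose Suc i)) * p ^ Suc i * ((1 - p) ^ (N - Suc i) * (1 - p))"
    unfolding binp_def by (simp add: algebra_simps)
  also have "\<dots> = (real (N - i) * real (N choose i)) * p ^ Suc i * (1 - p) ^ (N - i)"
    by (simp only: c e)
  also have "\<dots> = binp p N i * (real (N - i) * p)"
    unfolding binp_def by (simp add: algebra_simps)
  finally show ?thesis .
qed

lemma ratio_down:
  assumes p: "0 \<le> p" "p \<le> 1" and K: "0 \<le> K" and iN: "i < N"
    and lo: "real (Suc i) \<ge> real N * p - K" and s2: "real N * p * (1 - p) > 0"
  shows "binp p N i * (real N * p * (1 - p)) \<ge> binp p N (Suc i) * (real N * p * (1 - p) - (K + 1))"
proof -
  define s2 where "s2 = real N * p * (1 - p)"
  define B where "B = binp p N i"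
  define B' where "B' = binp p N (Suc i)"
  have B0: "B \<ge> 0" "B' \<ge> 0" unfolding B_def B'_def using p by (auto simp: binp_nonneg)
  have st: "B' * (real (Suc i) * (1 - p)) = B * (real (N - i) * p)"
    unfolding B_def B'_def using binp_step[OF iN] .
  have NI: "real (N - i) = real N - real i" using iN by simp
  define X where "X = s2 + (K + 1) * p"
  define Y where "Y = s2 - K * (1 - p)"
  have Xpos: "X > 0" unfolding X_def s2_def using s2 K p by (simp add: add_pos_nonneg)
  have h1: "real (N - i) * p \<le> X"
  proof -
    have "real (N - i) \<le> real N * (1 - p) + K + 1" using lo NI by (simp add: algebra_simps)
    then have "real (N - i) * p \<le> (real N * (1 - p) + K + 1) * p" by (rule mult_right_mono[OF _ p(1)])
    then show ?thesis unfolding X_def s2_def by (simp add: algebra_simps)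
  qed
  have h2: "real (Suc i) * (1 - p) \<ge> Y"
  proof -
    have "(real N * p - K) * (1 - p) \<le> real (Suc i) * (1 - p)" using lo p by (intro mult_right_mono) auto
    then show ?thesis unfolding Y_def s2_def by (simp add: algebra_simps)
  qed
  have "B * X \<ge> B' * Y"
  proof -
    have "B * X \<ge> B * (real (N - i) * p)" using h1 B0 by (simp add: mult_left_mono)
    moreover have "B' * (real (Suc i) * (1 - p)) \<ge> B' * Y" using h2 B0 by (simp add: mult_left_mono)
    ultimately show ?thesis using st by linarith
  qed
  have key: "Y * s2 \<ge> (s2 - (K + 1)) * X"
  proof -
    have "Y * s2 - (s2 - (K + 1)) * X = s2 * (1 - p) + (K + 1) * (K + 1) * p"
      unfolding X_def Y_def by (simp add: algebra_simps)
    moreover have "s2 * (1 - p) + (K + 1) * (K + 1) * p \<ge> 0"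
      using p K s2 unfolding s2_def by (intro add_nonneg_nonneg mult_nonneg_nonneg) auto
    ultimately show ?thesis by linarith
  qed
  have "B * s2 * X \<ge> B' * (s2 - (K + 1)) * X"
  proof -
    have s2p: "s2 \<ge> 0" using s2 unfolding s2_def by simp
    have a1: "(B' * Y) * s2 \<le> (B * X) * s2" using \<open>B * X \<ge> B' * Y\<close> s2p by (rule mult_right_mono)
    have a2: "B' * ((s2 - (K + 1)) * X) \<le> B' * (Y * s2)" using key B0 by (simp add: mult_left_mono)
    have "B' * ((s2 - (K + 1)) * X) \<le> (B * X) * s2" using a1 a2 by (simp add: mult.assoc)
    then show ?thesis by (simp add: mult_ac)
  qed
  then have "B * s2 \<ge> B' * (s2 - (K + 1))" using Xpos by simp
  then show ?thesis unfolding B_def B'_def s2_def .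
qed

lemma ratio_up:
  assumes p: "0 \<le> p" "p \<le> 1" and K: "0 \<le> K" and iN: "i < N"
    and hi: "real i \<le> real N * p + K" and s2: "real N * p * (1 - p) > 0"
  shows "binp p N (Suc i) * (real N * p * (1 - p)) \<ge> binp p N i * (real N * p * (1 - p) - (K + 1))"
proof -
  define s2 where "s2 = real N * p * (1 - p)"
  define B where "B = binp p N i"
  define B' where "B' = binp p N (Suc i)"
  have B0: "B \<ge> 0" "B' \<ge> 0" unfolding B_def B'_def using p by (auto simp: binp_nonneg)
  have st: "B' * (real (Suc i) * (1 - p)) = B * (real (N - i) * p)"
    unfolding B_def B'_def using binp_step[OF iN] .
  have NI: "real (N - i) = real N - real i" using iN by simp
  define X where "X = s2 + (K + 1) * (1 - p)"
  define Y where "Y = s2 - K * p"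
  have Xpos: "X > 0" unfolding X_def s2_def using s2 K p by (simp add: add_pos_nonneg)
  have h1: "real (Suc i) * (1 - p) \<le> X"
  proof -
    have "real (Suc i) \<le> real N * p + K + 1" using hi by simp
    then have "real (Suc i) * (1 - p) \<le> (real N * p + K + 1) * (1 - p)" using p by (intro mult_right_mono) auto
    then show ?thesis unfolding X_def s2_def by (simp add: algebra_simps)
  qed
  have h2: "real (N - i) * p \<ge> Y"
  proof -
    have "(real N * (1 - p) - K) * p \<le> real (N - i) * p" using hi NI p by (intro mult_right_mono) (auto simp: algebra_simps)
    then show ?thesis unfolding Y_def s2_def by (simp add: algebra_simps)
  qed
  have "B' * X \<ge> B * Y"
  proof -
    have "B' * X \<ge> B' * (real (Suc i) * (1 - p))" using h1 B0 by (simp add: mult_left_mono)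
    moreover have "B * (real (N - i) * p) \<ge> B * Y" using h2 B0 by (simp add: mult_left_mono)
    ultimately show ?thesis using st by linarith
  qed
  have key: "Y * s2 \<ge> (s2 - (K + 1)) * X"
  proof -
    have "Y * s2 - (s2 - (K + 1)) * X = s2 * p + (K + 1) * (K + 1) * (1 - p)"
      unfolding X_def Y_def by (simp add: algebra_simps)
    moreover have "s2 * p + (K + 1) * (K + 1) * (1 - p) \<ge> 0"
      using p K s2 unfolding s2_def by (intro add_nonneg_nonneg mult_nonneg_nonneg) auto
    ultimately show ?thesis by linarith
  qed
  have "B' * s2 * X \<ge> B * (s2 - (K + 1)) * X"
  proof -
    have s2p: "s2 \<ge> 0" using s2 unfolding s2_def by simp
    have a1: "(B * Y) * s2 \<le> (B' * X) * s2" using \<open>B' * X \<ge> B * Y\<close> s2p by (rule mult_right_mono)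
    have a2: "B * ((s2 - (K + 1)) * X) \<le> B * (Y * s2)" using key B0 by (simp add: mult_left_mono)
    have "B * ((s2 - (K + 1)) * X) \<le> (B' * X) * s2" using a1 a2 by (simp add: mult.assoc)
    then show ?thesis by (simp add: mult_ac)
  qed
  then have "B' * s2 \<ge> B * (s2 - (K + 1))" using Xpos by simp
  then show ?thesis unfolding B_def B'_def s2_def .
qed


lemma chain_up:
  fixes f :: "nat \<Rightarrow> real"
  assumes r: "r \<ge> 0" and st: "\<And>k. i \<le> k \<Longrightarrow> k < j \<Longrightarrow> f (Suc k) \<ge> r * f k" and ij: "i \<le> j"
  shows "f j \<ge> r ^ (j - i) * f i"
  using ij st
proof (induction j)
  case 0 then show ?case by simp
next
  case (Suc j)
  show ?case
  proof (cases "i = Suc j")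
    case True then show ?thesis by simp
  next
    case False
    then have ij: "i \<le> j" using Suc.prems by simp
    have IH: "f j \<ge> r ^ (j - i) * f i" using Suc.IH[OF ij] Suc.prems by simp
    have a: "r * f j \<le> f (Suc j)" using Suc.prems(2)[of j] ij by simp
    have b: "r * (r ^ (j - i) * f i) \<le> r * f j" using IH r by (simp add: mult_left_mono)
    have "f (Suc j) \<ge> r ^ Suc (j - i) * f i" using order_trans[OF b a] by (simp add: mult.assoc)
    moreover have "Suc j - i = Suc (j - i)" using ij by simp
    ultimately show ?thesis by simp
  qed
qed

lemma chain_down:
  fixes f :: "nat \<Rightarrow> real"
  assumes r: "r \<ge> 0" and st: "\<And>k. i \<le> k \<Longrightarrow> k < j \<Longrightarrow> f k \<ge> r * f (Suc k)" and ij: "i \<le> j"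
  shows "f i \<ge> r ^ (j - i) * f j"
  using ij st
proof (induction j)
  case 0 then show ?case by simp
next
  case (Suc j)
  show ?case
  proof (cases "i = Suc j")
    case True then show ?thesis by simp
  next
    case False
    then have ij: "i \<le> j" using Suc.prems by simp
    have IH: "f i \<ge> r ^ (j - i) * f j" using Suc.IH[OF ij] Suc.prems by simp
    have "f j \<ge> r * f (Suc j)" using Suc.prems(2)[of j] ij by simp
    then have "r ^ (j - i) * f j \<ge> r ^ (j - i) * (r * f (Suc j))" using r by (simp add: mult_left_mono)
    with IH have "f i \<ge> r ^ Suc (j - i) * f (Suc j)" by (simp add: mult.assoc mult.left_commute)
    moreover have "Suc j - i = Suc (j - i)" using ij by simp
    ultimately show ?thesis by simp
  qed
qed

lemma ratio_down':
  assumes p: "0 \<le> p" "p \<le> 1" and K: "0 \<le> K" and iN: "i < N"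
    and lo: "real (Suc i) \<ge> real N * p - K" and s2: "real N * p * (1 - p) > 0"
  shows "binp p N i \<ge> (1 - (K + 1) / (real N * p * (1 - p))) * binp p N (Suc i)"
proof -
  define s2 where "s2 = real N * p * (1 - p)"
  have "binp p N i * s2 \<ge> binp p N (Suc i) * (s2 - (K + 1))"
    using ratio_down[OF p K iN lo s2] unfolding s2_def .
  moreover have s2p: "s2 > 0" using s2 unfolding s2_def .
  ultimately have "binp p N i \<ge> binp p N (Suc i) * (s2 - (K + 1)) / s2"
    by (subst pos_divide_le_eq[OF s2p])
  also have "binp p N (Suc i) * (s2 - (K + 1)) / s2 = (1 - (K + 1) / s2) * binp p N (Suc i)"
    using s2p by (simp add: field_simps)
  finally show ?thesis unfolding s2_def .
qed

lemma ratio_up':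
  assumes p: "0 \<le> p" "p \<le> 1" and K: "0 \<le> K" and iN: "i < N"
    and hi: "real i \<le> real N * p + K" and s2: "real N * p * (1 - p) > 0"
  shows "binp p N (Suc i) \<ge> (1 - (K + 1) / (real N * p * (1 - p))) * binp p N i"
proof -
  define s2 where "s2 = real N * p * (1 - p)"
  have "binp p N (Suc i) * s2 \<ge> binp p N i * (s2 - (K + 1))"
    using ratio_up[OF p K iN hi s2] unfolding s2_def .
  moreover have s2p: "s2 > 0" using s2 unfolding s2_def .
  ultimately have "binp p N (Suc i) \<ge> binp p N i * (s2 - (K + 1)) / s2"
    by (subst pos_divide_le_eq[OF s2p])
  also have "binp p N i * (s2 - (K + 1)) / s2 = (1 - (K + 1) / s2) * binp p N i"
    using s2p by (simp add: field_simps)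
  finally show ?thesis unfolding s2_def .
qed

lemma sum_binp_le1:
  assumes p: "0 \<le> p" "p \<le> 1" and I: "I \<subseteq> {..N}"
  shows "sum (binp p N) I \<le> 1"
proof -
  have "sum (binp p N) I \<le> sum (binp p N) {..N}"
    using I by (intro sum_mono2) (auto simp: binp_nonneg p)
  also have "\<dots> = EB p N (\<lambda>_. 1)" unfolding EB_def by simp
  finally show ?thesis by (simp add: EB_const)
qed

lemma binp_upper:
  assumes p: "0 \<le> p" "p \<le> 1" and sg: "sqrt (real N * p * (1 - p)) \<ge> 4"
  shows "binp p N j \<le> 8 / sqrt (real N * p * (1 - p))"
proof -
  define s2 where "s2 = real N * p * (1 - p)"
  define \<sigma> where "\<sigma> = sqrt s2"
  have sg4: "\<sigma> \<ge> 4" using sg unfolding \<sigma>_def s2_def .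
  have s2pos: "s2 > 0" using sg4 real_sqrt_le_0_iff[of s2] unfolding \<sigma>_def by linarith
  have s2sq: "s2 = \<sigma>^2" unfolding \<sigma>_def using s2pos by simp
  define t where "t = nat \<lfloor>\<sigma> / 2\<rfloor>"
  have tfl: "real t = of_int \<lfloor>\<sigma> / 2\<rfloor>" unfolding t_def using sg4 by simp
  have t_le: "real t \<le> \<sigma> / 2" unfolding tfl by (rule of_int_floor_le)
  have t_ge: "real t \<ge> \<sigma> / 2 - 1" unfolding tfl by linarith
  have t_pos: "t > 0" using t_ge sg4 by linarith
  define r where "r = 1 - (real t + 1) / s2"
  have tr: "real t * (1 - r) \<le> 3/8"
  proof -
    have "real t * (1 - r) = real t * (real t + 1) / \<sigma>^2" unfolding r_def s2sq by simp
    also have "\<dots> \<le> (\<sigma> / 2) * (\<sigma> / 2 + 1) / \<sigma>^2"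
      using t_le sg4 by (intro divide_right_mono mult_mono) auto
    also have "\<dots> = 1/4 + 1 / (2 * \<sigma>)" using sg4 by (simp add: field_simps power2_eq_square)
    also have "\<dots> \<le> 3/8" using sg4 by (simp add: field_simps)
    finally show ?thesis .
  qed
  have r_le1: "r \<le> 1" unfolding r_def using s2pos by simp
  have r_ge0: "r \<ge> 0"
  proof -
    have t1: "1 \<le> real t" using t_pos by simp
    have "1 * (1 - r) \<le> real t * (1 - r)" using r_le1 by (intro mult_right_mono[OF t1]) simp
    then have "1 - r \<le> 3/8" using tr by simp
    then show ?thesis by simp
  qed
  have rt: "r ^ t \<ge> 1/2"
  proof -
    have "1 + real t * (r - 1) \<le> (1 + (r - 1)) ^ t" using r_ge0 by (intro Bernoulli_inequality) simp
    then show ?thesis using tr by (simp add: algebra_simps)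
  qed
  have rq: "r ^ q \<ge> 1/2" if "q \<le> t" for q
    using rt power_decreasing[OF that r_ge0 r_le1] by linarith
  have \<sigma>le: "\<sigma> \<le> s2" using sg4 s2sq by (simp add: power2_eq_square)
  have s2N: "s2 \<le> real N * p" unfolding s2_def using p by (simp add: mult_left_le)
  have s2N': "s2 \<le> real N * (1 - p)" unfolding s2_def using p
    by (metis mult.commute mult.left_commute mult_left_le diff_ge_0_iff_ge mult_nonneg_nonneg of_nat_0_le_iff)
  have main: "real t * binp p N j / 2 \<le> 1"
  proof (cases "j \<le> N")
    case False then show ?thesis by (simp add: binp_big)
  next
    case jN: True
    show ?thesis
    proof (cases "real j \<ge> real N * p")
      case True
      have jt: "t \<le> j" using True s2N \<sigma>le t_le sg4 by linarith
      define I where "I = {j + 1 - t..j}"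
      have cI: "card I = t" unfolding I_def using jt t_pos by simp
      have "\<forall>i\<in>I. binp p N i \<ge> binp p N j / 2"
      proof
        fix i assume iI: "i \<in> I"
        have ij: "i \<le> j" and ji: "j - i \<le> t" using iI jt t_pos unfolding I_def by auto
        have "binp p N i \<ge> r ^ (j - i) * binp p N j"
        proof (rule chain_down[OF r_ge0 _ ij])
          fix k assume "i \<le> k" "k < j"
          have lo: "real (Suc k) \<ge> real N * p - real t" using \<open>i \<le> k\<close> iI True jt unfolding I_def by auto
          show "binp p N k \<ge> r * binp p N (Suc k)"
            using ratio_down'[OF p _ _ lo, of ] \<open>k < j\<close> jN s2pos unfolding r_def s2_def by simp
        qed
        moreover have "r ^ (j - i) * binp p N j \<ge> (1/2) * binp p N j"
          using rq[OF ji] by (intro mult_right_mono) (auto simp: binp_nonneg p)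
        ultimately show "binp p N i \<ge> binp p N j / 2" by simp
      qed
      then have "sum (\<lambda>_. binp p N j / 2) I \<le> sum (binp p N) I" by (intro sum_mono) auto
      also have "\<dots> \<le> 1" using jN by (intro sum_binp_le1 p) (auto simp: I_def)
      finally show ?thesis using cI by simp
    next
      case False
      define I where "I = {j..<j + t}"
      have cI: "card I = t" unfolding I_def by simp
      have jtN: "j + t \<le> N"
      proof -
        have "real j + real t < real N * p + real N * (1 - p)" using False t_le \<sigma>le s2N' sg4 by linarith
        then show ?thesis by (simp add: algebra_simps)
      qed
      have "\<forall>i\<in>I. binp p N i \<ge> binp p N j / 2"
      proof
        fix i assume iI: "i \<in> I"
        have ij: "j \<le> i" and ji: "i - j \<le> t" using iI unfolding I_def by auto
        have "binp p N i \<ge> r ^ (i - j) * binp p N j"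
        proof (rule chain_up[OF r_ge0 _ ij])
          fix k assume "j \<le> k" "k < i"
          have hi: "real k \<le> real N * p + real t" using \<open>k < i\<close> iI False unfolding I_def by auto
          have kN: "k < N" using \<open>k < i\<close> iI jtN unfolding I_def by auto
          show "binp p N (Suc k) \<ge> r * binp p N k"
            using ratio_up'[OF p _ kN hi] s2pos unfolding r_def s2_def by simp
        qed
        moreover have "r ^ (i - j) * binp p N j \<ge> (1/2) * binp p N j"
          using rq[OF ji] by (intro mult_right_mono) (auto simp: binp_nonneg p)
        ultimately show "binp p N i \<ge> binp p N j / 2" by simp
      qed
      then have "sum (\<lambda>_. binp p N j / 2) I \<le> sum (binp p N) I" by (intro sum_mono) auto
      also have "\<dots> \<le> 1" using jtN by (intro sum_binp_le1 p) (auto simp: I_def)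
      finally show ?thesis using cI by simp
    qed
  qed
  have "binp p N j \<le> 2 / real t" using main t_pos by (simp add: field_simps)
  also have "\<dots> \<le> 8 / \<sigma>" using t_ge sg4 t_pos by (simp add: field_simps)
  finally show ?thesis unfolding \<sigma>_def s2_def .
qed


lemma pow_exp_lower:
  fixes x :: real
  assumes "0 \<le> x" "x \<le> 1/2"
  shows "(1 - x) ^ k \<ge> exp (- 2 * x * real k)"
proof -
  have l: "ln (1 - x) \<ge> - 2 * x"
  proof -
    have "x * x \<le> x * (1/2)" using assms by (intro mult_left_mono) auto
    then show ?thesis using ln_one_minus_pos_lower_bound[OF assms] by (simp add: power2_eq_square)
  qed
  have pos: "1 - x > 0" using assms by simp
  have "(1 - x) ^ k = exp (real k * ln (1 - x))"
    using pos by (simp add: exp_of_nat_mult)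
  also have "\<dots> \<ge> exp (- 2 * x * real k)"
  proof -
    have "real k * (- 2 * x) \<le> real k * ln (1 - x)" using l by (intro mult_left_mono) auto
    then show ?thesis by (simp add: algebra_simps)
  qed
  finally show ?thesis .
qed

lemma pigeon:
  fixes f :: "nat \<Rightarrow> real"
  assumes "finite W" "W \<noteq> {}" "sum f W \<ge> a"
  shows "\<exists>x\<in>W. f x \<ge> a / real (card W)"
proof (rule ccontr)
  assume "\<not> ?thesis"
  then have "\<forall>x\<in>W. f x < a / real (card W)" by auto
  then have "sum f W < sum (\<lambda>_. a / real (card W)) W"
    using assms by (intro sum_strict_mono) auto
  also have "\<dots> = a" using assms by simp
  finally show False using assms by simp
qed

lemma card_window:
  fixes \<nu> \<sigma> :: real
  assumes "\<sigma> \<ge> 0"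
  shows "real (card {i::nat. i \<le> N \<and> \<bar>real i - \<nu>\<bar> \<le> 2 * \<sigma>}) \<le> 4 * \<sigma> + 1"
proof -
  define lo where "lo = nat \<lceil>\<nu> - 2 * \<sigma>\<rceil>"
  define M where "M = nat \<lfloor>4 * \<sigma>\<rfloor>"
  have lo_ge: "real lo \<ge> \<nu> - 2 * \<sigma>" unfolding lo_def
    by (rule real_nat_ceiling_ge)
  have sub: "{i::nat. i \<le> N \<and> \<bar>real i - \<nu>\<bar> \<le> 2 * \<sigma>} \<subseteq> {lo..<lo + M + 1}"
  proof
    fix i assume "i \<in> {i::nat. i \<le> N \<and> \<bar>real i - \<nu>\<bar> \<le> 2 * \<sigma>}"
    then have h: "\<bar>real i - \<nu>\<bar> \<le> 2 * \<sigma>" by simp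
    have "lo \<le> i" unfolding lo_def using h by (simp add: nat_le_iff ceiling_le_iff)
    moreover have "real (i - lo) \<le> 4 * \<sigma>" using h lo_ge \<open>lo \<le> i\<close> by (simp add: of_nat_diff)
    then have "i - lo \<le> M" unfolding M_def using assms by (simp add: le_nat_floor le_floor_iff)
    ultimately show "i \<in> {lo..<lo + M + 1}" by simp
  qed
  have "card {i::nat. i \<le> N \<and> \<bar>real i - \<nu>\<bar> \<le> 2 * \<sigma>} \<le> card {lo..<lo + M + 1}"
    by (rule card_mono[OF _ sub]) simp
  then have "real (card {i::nat. i \<le> N \<and> \<bar>real i - \<nu>\<bar> \<le> 2 * \<sigma>}) \<le> real M + 1" by simp
  also have "real M \<le> 4 * \<sigma>" unfolding M_def using assms by simp
  finally show ?thesis by simp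
qed


lemma binp_lower:
  assumes p: "0 \<le> p" "p \<le> 1" and sg: "sqrt (real N * p * (1 - p)) \<ge> 10"
    and win: "\<bar>real i - real N * p\<bar> \<le> 4 * sqrt (real N * p * (1 - p))"
  shows "binp p N i \<ge> exp (- 60) / (7 * sqrt (real N * p * (1 - p)))"
proof -
  define s2 where "s2 = real N * p * (1 - p)"
  define \<sigma> where "\<sigma> = sqrt s2"
  define \<nu> where "\<nu> = real N * p"
  have sg10: "\<sigma> \<ge> 10" using sg unfolding \<sigma>_def s2_def .
  have s2pos: "s2 > 0" using sg10 real_sqrt_le_0_iff[of s2] unfolding \<sigma>_def by linarith
  have s2sq: "s2 = \<sigma>^2" unfolding \<sigma>_def using s2pos by simp
  have win': "\<bar>real i - \<nu>\<bar> \<le> 4 * \<sigma>" using win unfolding \<sigma>_def s2_def \<nu>_def .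
  have s2N': "s2 \<le> real N * (1 - p)" unfolding s2_def using p
    by (metis mult.commute mult.left_commute mult_left_le diff_ge_0_iff_ge mult_nonneg_nonneg of_nat_0_le_iff)
  have \<sigma>4: "4 * \<sigma> \<le> s2" using sg10 s2sq by (simp add: power2_eq_square)
  have iN: "i \<le> N"
  proof -
    have "real i \<le> \<nu> + real N * (1 - p)" using win' \<sigma>4 s2N' by linarith
    then show ?thesis unfolding \<nu>_def by (simp add: algebra_simps)
  qed
  define W where "W = {i::nat. i \<le> N \<and> \<bar>real i - \<nu>\<bar> \<le> 2 * \<sigma>}"
  have finW: "finite W" unfolding W_def by simp
  have cheb: "EB p N (\<lambda>i. if \<bar>real i - \<nu>\<bar> > 2 * \<sigma> then 1 else 0) \<le> 1/4"
  proof -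
    have "EB p N (\<lambda>i. if \<bar>real i - \<nu>\<bar> > 2 * \<sigma> then 1 else 0) \<le> s2 / (2 * \<sigma>)^2"
      using EB_cheb[OF p, of "2 * \<sigma>" N] sg10 unfolding s2_def \<nu>_def by simp
    also have "\<dots> = 1/4" using s2sq s2pos sg10 by (simp add: power2_eq_square)
    finally show ?thesis .
  qed
  have split: "EB p N (\<lambda>i. if \<bar>real i - \<nu>\<bar> \<le> 2 * \<sigma> then 1 else 0) + EB p N (\<lambda>i. if \<bar>real i - \<nu>\<bar> > 2 * \<sigma> then 1 else 0) = 1"
  proof -
    have "EB p N (\<lambda>i. if \<bar>real i - \<nu>\<bar> \<le> 2 * \<sigma> then 1 else 0) + EB p N (\<lambda>i. if \<bar>real i - \<nu>\<bar> > 2 * \<sigma> then 1 else 0)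
      = EB p N (\<lambda>i. (if \<bar>real i - \<nu>\<bar> \<le> 2 * \<sigma> then 1 else 0) + (if \<bar>real i - \<nu>\<bar> > 2 * \<sigma> then 1 else 0))"
      by (rule EB_add[symmetric])
    also have "\<dots> = EB p N (\<lambda>_. 1)" by (rule arg_cong[where f="EB p N"]) auto
    finally show ?thesis by (simp add: EB_const)
  qed
  have sumW: "sum (binp p N) W = EB p N (\<lambda>i. if \<bar>real i - \<nu>\<bar> \<le> 2 * \<sigma> then 1 else 0)"
  proof -
    have "W = {i \<in> {..N}. \<bar>real i - \<nu>\<bar> \<le> 2 * \<sigma>}" unfolding W_def by auto
    then have "sum (binp p N) W = (\<Sum>i\<le>N. if \<bar>real i - \<nu>\<bar> \<le> 2 * \<sigma> then binp p N i else 0)"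
      using sum.inter_filter[of "{..N}" "binp p N" "\<lambda>i. \<bar>real i - \<nu>\<bar> \<le> 2 * \<sigma>"] by simp
    also have "\<dots> = EB p N (\<lambda>i. if \<bar>real i - \<nu>\<bar> \<le> 2 * \<sigma> then 1 else 0)"
      unfolding EB_def by (rule sum.cong) auto
    finally show ?thesis .
  qed
  have sumW34: "sum (binp p N) W \<ge> 3/4" using sumW split cheb by linarith
  have Wne: "W \<noteq> {}" using sumW34 by auto
  obtain i0 where i0W: "i0 \<in> W" and i0b: "binp p N i0 \<ge> (3/4) / real (card W)"
    using pigeon[OF finW Wne sumW34] by blast
  have cardW: "real (card W) \<le> 4 * \<sigma> + 1" unfolding W_def by (rule card_window) (use sg10 in simp)
  have cardpos: "real (card W) > 0" using finW Wne by (simp add: card_gt_0_iff)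
  have i0b': "binp p N i0 \<ge> 1 / (7 * \<sigma>)"
  proof -
    have "(3/4) / (4 * \<sigma> + 1) \<le> (3/4) / real (card W)"
      using cardW cardpos by (intro divide_left_mono) auto
    moreover have "1 / (7 * \<sigma>) \<le> (3/4) / (4 * \<sigma> + 1)" using sg10 by (simp add: field_simps)
    ultimately show ?thesis using i0b by linarith
  qed
  have i0N: "i0 \<le> N" and i0w: "\<bar>real i0 - \<nu>\<bar> \<le> 2 * \<sigma>" using i0W unfolding W_def by auto
  define x where "x = (4 * \<sigma> + 1) / s2"
  define r where "r = 1 - x"
  have x0: "x \<ge> 0" unfolding x_def using s2pos sg10 by simp
  have xh: "x \<le> 1/2"
  proof -
    have "10 * \<sigma> \<le> \<sigma> * \<sigma>" using sg10 by (intro mult_right_mono) auto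
    then have h: "2 + \<sigma> * 8 \<le> \<sigma> * \<sigma>" using sg10 by linarith
    show ?thesis unfolding x_def using h s2pos s2sq sg10 by (simp add: field_simps power2_eq_square)
  qed
  have r0: "r \<ge> 0" unfolding r_def using xh by simp
  define k where "k = (if i0 \<le> i then i - i0 else i0 - i)"
  have chain: "binp p N i \<ge> r ^ k * binp p N i0"
  proof (cases "i0 \<le> i")
    case True
    have "binp p N i \<ge> r ^ (i - i0) * binp p N i0"
    proof (rule chain_up[OF r0 _ True])
      fix j assume "i0 \<le> j" "j < i"
      have hi: "real j \<le> real N * p + 4 * \<sigma>" using \<open>j < i\<close> win' unfolding \<nu>_def by linarith
      have jN: "j < N" using \<open>j < i\<close> iN by simp
      show "binp p N (Suc j) \<ge> r * binp p N j"
        using ratio_up'[OF p _ jN hi] s2pos sg10 unfolding r_def x_def s2_def by simp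
    qed
    then show ?thesis unfolding k_def using True by simp
  next
    case False
    then have ii0: "i \<le> i0" by simp
    have "binp p N i \<ge> r ^ (i0 - i) * binp p N i0"
    proof (rule chain_down[OF r0 _ ii0])
      fix j assume "i \<le> j" "j < i0"
      have lo: "real (Suc j) \<ge> real N * p - 4 * \<sigma>" using \<open>i \<le> j\<close> win' unfolding \<nu>_def by linarith
      have jN: "j < N" using \<open>j < i0\<close> i0N by simp
      show "binp p N j \<ge> r * binp p N (Suc j)"
        using ratio_down'[OF p _ jN lo] s2pos sg10 unfolding r_def x_def s2_def by simp
    qed
    then show ?thesis unfolding k_def using False by simp
  qed
  have kb: "real k \<le> 6 * \<sigma>" unfolding k_def using win' i0w by (auto simp: of_nat_diff)
  have rk: "r ^ k \<ge> exp (- 60)"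
  proof -
    have "r ^ k \<ge> exp (- 2 * x * real k)" unfolding r_def by (rule pow_exp_lower[OF x0 xh])
    moreover have "2 * x * real k \<le> 60"
    proof -
      have "2 * x * real k \<le> 2 * x * (6 * \<sigma>)" using kb x0 by (intro mult_left_mono) auto
      also have "\<dots> = 12 * (4 * \<sigma> + 1) / \<sigma>" unfolding x_def s2sq using sg10 by (simp add: field_simps power2_eq_square)
      also have "\<dots> \<le> 60" using sg10 by (simp add: field_simps)
      finally show ?thesis .
    qed
    moreover have "exp (- 60) \<le> exp (- 2 * x * real k)"
      by (subst exp_le_cancel_iff) (use calculation in linarith)
    ultimately show ?thesis by linarith
  qed
  have "binp p N i \<ge> exp (- 60) * (1 / (7 * \<sigma>))"
  proof -
    have "exp (- 60) * (1 / (7 * \<sigma>)) \<le> r ^ k * binp p N i0"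
      using rk i0b' sg10 r0 by (intro mult_mono) auto
    then show ?thesis using chain by linarith
  qed
  then show ?thesis unfolding \<sigma>_def s2_def by simp
qed


lemma EB_swap: "EB p N (\<lambda>i. EB q M (\<lambda>j. g i j)) = EB q M (\<lambda>j. EB p N (\<lambda>i. g i j))"
  unfolding EB_def by (simp add: sum_distrib_left sum.swap[of _ "{..N}"] mult.left_commute)

lemma EB_point: "EB p N (\<lambda>i. if i = k then 1 else 0) = binp p N k"
proof -
  have "EB p N (\<lambda>i. if i = k then 1 else 0) = (\<Sum>i\<le>N. if i = k then binp p N i else 0)"
    unfolding EB_def by (rule sum.cong) auto
  also have "\<dots> = (if k \<in> {..N} then binp p N k else 0)" by (rule sum.delta) simp
  also have "\<dots> = binp p N k" by (simp add: binp_big)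
  finally show ?thesis .
qed

definition G :: "real \<Rightarrow> nat \<Rightarrow> nat \<Rightarrow> real" where
  "G p a b = EB p a (\<lambda>i. EB p b (\<lambda>j. if j + 2 \<le> i then 1 else 0))"

lemma G_step: "G p (Suc N) b = G p N b + p * EB p b (\<lambda>j. binp p N (Suc j))"
proof -
  define F where "F i = EB p b (\<lambda>j. if j + 2 \<le> i then 1 else 0)" for i
  have dF: "F (Suc i) = F i + EB p b (\<lambda>j. if i = Suc j then 1 else 0)" for i
  proof -
    have "F (Suc i) = EB p b (\<lambda>j. (if j + 2 \<le> i then 1 else 0) + (if i = Suc j then 1 else 0))"
      unfolding F_def by (intro arg_cong[where f="EB p b"]) auto
    then show ?thesis unfolding F_def by (simp add: EB_add)
  qed
  have "G p (Suc N) b = p * EB p N (\<lambda>i. F (Suc i)) + (1 - p) * EB p N F"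
    unfolding G_def F_def by (rule EB_Suc)
  also have "EB p N (\<lambda>i. F (Suc i)) = EB p N F + EB p N (\<lambda>i. EB p b (\<lambda>j. if i = Suc j then 1 else 0))"
    unfolding dF by (rule EB_add)
  also have "EB p N (\<lambda>i. EB p b (\<lambda>j. if i = Suc j then 1 else 0)) = EB p b (\<lambda>j. EB p N (\<lambda>i. if i = Suc j then 1 else 0))"
    by (rule EB_swap)
  also have "\<dots> = EB p b (\<lambda>j. binp p N (Suc j))" by (simp add: EB_point)
  finally show ?thesis unfolding G_def F_def by (simp add: algebra_simps)
qed

lemma G_sum: "G p (b + m) b = G p b b + p * (\<Sum>h<m. EB p b (\<lambda>j. binp p (b + h) (Suc j)))"
proof (induction m)
  case 0 then show ?case by simp
next
  case (Suc m)
  show ?case using Suc by (simp add: G_step algebra_simps)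
qed

lemma G_base:
  assumes p: "0 \<le> p" "p \<le> 1" and sg: "sqrt (real b * p * (1 - p)) \<ge> 4"
  shows "G p b b \<ge> 1/2 - 12 / sqrt (real b * p * (1 - p))"
proof -
  define \<sigma> where "\<sigma> = sqrt (real b * p * (1 - p))"
  define I3 where "I3 i j = (if i \<le> j + 1 \<and> j \<le> i + 1 then 1 else (0::real))" for i j :: nat
  have tot: "G p b b + EB p b (\<lambda>i. EB p b (\<lambda>j. if i + 2 \<le> j then 1 else 0)) + EB p b (\<lambda>i. EB p b (\<lambda>j. I3 i j)) = 1"
  proof -
    have "G p b b + EB p b (\<lambda>i. EB p b (\<lambda>j. if i + 2 \<le> j then 1 else 0)) + EB p b (\<lambda>i. EB p b (\<lambda>j. I3 i j))
      = EB p b (\<lambda>i. EB p b (\<lambda>j. (if j + 2 \<le> i then 1 else 0) + (if i + 2 \<le> j then 1 else 0) + I3 i j))"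
      unfolding G_def by (simp add: EB_add)
    also have "\<dots> = EB p b (\<lambda>i. EB p b (\<lambda>j. 1))"
      unfolding I3_def by (intro arg_cong[where f="EB p b"] ext) auto
    finally show ?thesis by (simp add: EB_const)
  qed
  have sym: "EB p b (\<lambda>i. EB p b (\<lambda>j. if i + 2 \<le> j then 1 else 0)) = G p b b"
    unfolding G_def by (rule EB_swap)
  have up: "binp p b k \<le> 8 / \<sigma>" for k using binp_upper[OF p sg] unfolding \<sigma>_def .
  have inner: "EB p b (\<lambda>j. I3 i j) \<le> 24 / \<sigma>" for i
  proof -
    have "EB p b (\<lambda>j. I3 i j) \<le> EB p b (\<lambda>j. (if j = i - 1 then 1 else 0) + (if j = i then 1 else 0) + (if j = Suc i then 1 else 0))"
      unfolding I3_def by (intro EB_mono p) auto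
    also have "\<dots> = binp p b (i - 1) + binp p b i + binp p b (Suc i)"
      by (simp add: EB_add EB_point)
    also have "\<dots> \<le> 24 / \<sigma>" using up[of "i - 1"] up[of i] up[of "Suc i"] by simp
    finally show ?thesis .
  qed
  have "EB p b (\<lambda>i. EB p b (\<lambda>j. I3 i j)) \<le> EB p b (\<lambda>_. 24 / \<sigma>)"
    using inner by (intro EB_mono p) auto
  then have "EB p b (\<lambda>i. EB p b (\<lambda>j. I3 i j)) \<le> 24 / \<sigma>" by (simp add: EB_const)
  then show ?thesis using tot sym unfolding \<sigma>_def by linarith
qed


lemma EB_window:
  assumes p: "0 \<le> p" "p \<le> 1" and sg: "sqrt (real N * p * (1 - p)) > 0"
  shows "EB p N (\<lambda>i. if \<bar>real i - real N * p\<bar> \<le> 2 * sqrt (real N * p * (1 - p)) then 1 else 0) \<ge> 3/4"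
proof -
  define s2 where "s2 = real N * p * (1 - p)"
  define \<sigma> where "\<sigma> = sqrt s2"
  define \<nu> where "\<nu> = real N * p"
  have sgp: "\<sigma> > 0" using sg unfolding \<sigma>_def s2_def .
  have s2pos: "s2 > 0" using sgp real_sqrt_le_0_iff[of s2] unfolding \<sigma>_def by linarith
  have s2sq: "s2 = \<sigma>^2" unfolding \<sigma>_def using s2pos by simp
  have cheb: "EB p N (\<lambda>i. if \<bar>real i - \<nu>\<bar> > 2 * \<sigma> then 1 else 0) \<le> 1/4"
  proof -
    have "EB p N (\<lambda>i. if \<bar>real i - \<nu>\<bar> > 2 * \<sigma> then 1 else 0) \<le> s2 / (2 * \<sigma>)^2"
      using EB_cheb[OF p, of "2 * \<sigma>" N] sgp unfolding s2_def \<nu>_def by simp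
    also have "\<dots> = 1/4" using s2sq s2pos sgp by (simp add: power2_eq_square)
    finally show ?thesis .
  qed
  have split: "EB p N (\<lambda>i. if \<bar>real i - \<nu>\<bar> \<le> 2 * \<sigma> then 1 else 0) + EB p N (\<lambda>i. if \<bar>real i - \<nu>\<bar> > 2 * \<sigma> then 1 else 0) = 1"
  proof -
    have "EB p N (\<lambda>i. if \<bar>real i - \<nu>\<bar> \<le> 2 * \<sigma> then 1 else 0) + EB p N (\<lambda>i. if \<bar>real i - \<nu>\<bar> > 2 * \<sigma> then 1 else 0)
      = EB p N (\<lambda>i. (if \<bar>real i - \<nu>\<bar> \<le> 2 * \<sigma> then 1 else 0) + (if \<bar>real i - \<nu>\<bar> > 2 * \<sigma> then 1 else 0))"
      by (rule EB_add[symmetric])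
    also have "\<dots> = EB p N (\<lambda>_. 1)" by (rule arg_cong[where f="EB p N"]) auto
    finally show ?thesis by (simp add: EB_const)
  qed
  show ?thesis using split cheb unfolding \<sigma>_def s2_def \<nu>_def by linarith
qed

definition kapL :: real where "kapL = 3 * exp (- 60) / 56"
definition TT :: real where "TT = 24 / kapL"

lemma kapL_pos: "kapL > 0" unfolding kapL_def by simp
lemma kapL_le: "kapL \<le> 3 / 56" unfolding kapL_def by simp
lemma TT_ge: "TT \<ge> 448"
proof -
  have "24 / (3 / 56) \<le> 24 / kapL" using kapL_pos kapL_le by (intro divide_left_mono) auto
  then show ?thesis unfolding TT_def by simp
qed

lemma Ph_lower:
  assumes p: "0 \<le> p" "p \<le> 1" and sg: "sqrt (real b * p * (1 - p)) \<ge> 10"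
    and hp: "real h * p \<le> sqrt (real b * p * (1 - p))" and hb: "b + h \<le> 4 * b"
  shows "EB p b (\<lambda>j. binp p (b + h) (Suc j)) \<ge> kapL / sqrt (real b * p * (1 - p))"
proof -
  define \<sigma> where "\<sigma> = sqrt (real b * p * (1 - p))"
  define \<sigma>' where "\<sigma>' = sqrt (real (b + h) * p * (1 - p))"
  have s10: "\<sigma> \<ge> 10" using sg unfolding \<sigma>_def .
  have pp: "p * (1 - p) \<ge> 0" using p by simp
  have s1: "\<sigma> \<le> \<sigma>'" unfolding \<sigma>_def \<sigma>'_def using pp
    by (simp add: mult.assoc mult_right_mono)
  have s2: "\<sigma>' \<le> 2 * \<sigma>"
  proof -
    have "real (b + h) * p * (1 - p) \<le> 4 * (real b * p * (1 - p))"
      using hb pp by (simp only: mult.assoc) (rule mult_right_mono[of "real (b + h)" "4 * real b", simplified mult.assoc]; simp)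
    then have "\<sigma>' \<le> sqrt (4 * (real b * p * (1 - p)))" unfolding \<sigma>'_def by (rule real_sqrt_le_mono)
    also have "\<dots> = 2 * \<sigma>" unfolding \<sigma>_def by (simp add: real_sqrt_mult)
    finally show ?thesis .
  qed
  have s'10: "\<sigma>' \<ge> 10" using s1 s10 by linarith
  have pt: "binp p (b + h) (Suc j) \<ge> exp (- 60) / (14 * \<sigma>)" if jw: "\<bar>real j - real b * p\<bar> \<le> 2 * \<sigma>" for j
  proof -
    have "\<bar>real (Suc j) - real (b + h) * p\<bar> \<le> 4 * \<sigma>'"
    proof -
      have "\<bar>real (Suc j) - real (b + h) * p\<bar> \<le> \<bar>real j - real b * p\<bar> + 1 + real h * p"
      proof -
        have hp0: "real h * p \<ge> 0" using p by simp
        have e: "real (Suc j) - real (b + h) * p = (real j - real b * p) + (1 - real h * p)" by (simp add: algebra_simps)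
        have "\<bar>real (Suc j) - real (b + h) * p\<bar> \<le> \<bar>real j - real b * p\<bar> + \<bar>1 - real h * p\<bar>"
          unfolding e by (rule abs_triangle_ineq)
        moreover have "\<bar>1 - real h * p\<bar> \<le> 1 + real h * p" using hp0 by (simp add: abs_le_iff)
        ultimately show ?thesis by linarith
      qed
      also have "\<dots> \<le> 4 * \<sigma>" using jw hp s10 unfolding \<sigma>_def by linarith
      also have "\<dots> \<le> 4 * \<sigma>'" using s1 by simp
      finally show ?thesis .
    qed
    then have "binp p (b + h) (Suc j) \<ge> exp (- 60) / (7 * \<sigma>')"
      using binp_lower[OF p, of "b + h" "Suc j"] s'10 unfolding \<sigma>'_def by simp
    moreover have "exp (- 60) / (14 * \<sigma>) \<le> exp (- 60) / (7 * \<sigma>')"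
      using s2 s'10 by (intro divide_left_mono) auto
    ultimately show ?thesis by linarith
  qed
  have c1: "EB p b (\<lambda>j. binp p (b + h) (Suc j)) \<ge>
        EB p b (\<lambda>j. (exp (- 60) / (14 * \<sigma>)) * (if \<bar>real j - real b * p\<bar> \<le> 2 * \<sigma> then 1 else 0))"
    using pt by (intro EB_mono p) (auto simp: binp_nonneg p)
  have c2: "EB p b (\<lambda>j. (exp (- 60) / (14 * \<sigma>)) * (if \<bar>real j - real b * p\<bar> \<le> 2 * \<sigma> then 1 else 0))
     = (exp (- 60) / (14 * \<sigma>)) * EB p b (\<lambda>j. if \<bar>real j - real b * p\<bar> \<le> 2 * \<sigma> then 1 else 0)"
    by (rule EB_cmult)
  have c3: "(exp (- 60) / (14 * \<sigma>)) * EB p b (\<lambda>j. if \<bar>real j - real b * p\<bar> \<le> 2 * \<sigma> then 1 else 0) \<ge> (exp (- 60) / (14 * \<sigma>)) * (3/4)"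
  proof -
    have sp: "sqrt (real b * p * (1 - p)) > 0" using s10 unfolding \<sigma>_def by linarith
    have w: "EB p b (\<lambda>j. if \<bar>real j - real b * p\<bar> \<le> 2 * \<sigma> then 1 else 0) \<ge> 3/4"
      using EB_window[OF p sp] unfolding \<sigma>_def .
    have nn: "exp (- 60) / (14 * \<sigma>) \<ge> 0" using s10 by simp
    show ?thesis using mult_left_mono[OF w nn] .
  qed
  have "EB p b (\<lambda>j. binp p (b + h) (Suc j)) \<ge> (exp (- 60) / (14 * \<sigma>)) * (3/4)"
    using c1 c2 c3 by linarith
  then show ?thesis unfolding kapL_def \<sigma>_def by (simp add: field_simps)
qed


lemma regime1:
  fixes p c nr :: real and b m :: nat
  assumes p: "0 < p" "p \<le> 1" and c: "0 < c" "c \<le> 1" and nr: "nr > 0"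
    and hb: "nr \<le> 4 * real b" and hab: "real b + real m \<le> nr"
    and hm: "real m \<ge> c * sqrt nr" and hA: "p * c * sqrt nr \<ge> TT"
    and sg: "sqrt (real b * p * (1 - p)) \<ge> TT"
  shows "G p (b + m) b \<ge> 1/2 + kapL / 2 * c * sqrt p"
proof -
  define \<sigma> where "\<sigma> = sqrt (real b * p * (1 - p))"
  have sT: "\<sigma> \<ge> TT" using sg unfolding \<sigma>_def .
  have s448: "\<sigma> \<ge> 448" using sT TT_ge by linarith
  have p01: "0 \<le> p" "p \<le> 1" using p by auto
  define P where "P h = EB p b (\<lambda>j. binp p (b + h) (Suc j))" for h
  have Pnn: "P h \<ge> 0" for h unfolding P_def by (intro EB_nonneg p01) (simp add: binp_nonneg p01)
  have G1: "G p (b + m) b = G p b b + p * (\<Sum>h<m. P h)" unfolding P_def by (rule G_sum)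
  have G0: "G p b b \<ge> 1/2 - 12 / \<sigma>" using G_base[OF p01] s448 unfolding \<sigma>_def by simp
  define H where "H = min m (nat \<lfloor>\<sigma> / p\<rfloor> + 1)"
  have sp0: "\<sigma> / p \<ge> 0" using s448 p by simp
  have flo: "real (nat \<lfloor>\<sigma> / p\<rfloor>) = of_int \<lfloor>\<sigma> / p\<rfloor>" using sp0 by simp
  have fl1: "real (nat \<lfloor>\<sigma> / p\<rfloor>) \<le> \<sigma> / p" unfolding flo by (rule of_int_floor_le)
  have fl2: "real (nat \<lfloor>\<sigma> / p\<rfloor>) > \<sigma> / p - 1" unfolding flo by linarith
  have Hm: "H \<le> m" unfolding H_def by simp
  have Ph: "P h \<ge> kapL / \<sigma>" if "h < H" for h
  proof -
    have "h \<le> nat \<lfloor>\<sigma> / p\<rfloor>" using that unfolding H_def by simp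
    then have "real h \<le> real (nat \<lfloor>\<sigma> / p\<rfloor>)" by (simp only: of_nat_le_iff)
    then have "real h \<le> \<sigma> / p" using fl1 by linarith
    then have hp: "real h * p \<le> \<sigma>" using p by (simp add: field_simps)
    have hb4: "b + h \<le> 4 * b" using that Hm hab hb by linarith
    show ?thesis unfolding P_def \<sigma>_def
      by (rule Ph_lower[OF p01 _ _ hb4]) (use s448 hp in \<open>auto simp: \<sigma>_def\<close>)
  qed
  have sumH: "(\<Sum>h<m. P h) \<ge> real H * (kapL / \<sigma>)"
  proof -
    have "(\<Sum>h<H. kapL / \<sigma>) \<le> (\<Sum>h<H. P h)" using Ph by (intro sum_mono) auto
    also have "\<dots> \<le> (\<Sum>h<m. P h)" using Hm Pnn by (intro sum_mono2) auto
    finally show ?thesis by simp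
  qed
  have pH: "p * real H \<ge> min (p * real m) \<sigma>"
  proof (cases "H = m")
    case True then show ?thesis by simp
  next
    case False
    then have "H = nat \<lfloor>\<sigma> / p\<rfloor> + 1" unfolding H_def by simp
    then have "real H > \<sigma> / p" using fl2 by simp
    then have "p * real H > \<sigma>" using p by (simp add: field_simps)
    then show ?thesis by simp
  qed
  have main: "G p (b + m) b \<ge> 1/2 - 12 / \<sigma> + p * real H * kapL / \<sigma>"
  proof -
    have "p * (\<Sum>h<m. P h) \<ge> p * (real H * (kapL / \<sigma>))" using sumH p by (intro mult_left_mono) auto
    then show ?thesis using G1 G0 by simp
  qed
  have kp: "kapL > 0" by (rule kapL_pos)
  have cp1: "c * sqrt p \<le> 1" using c p by (simp add: mult_le_one)
  show ?thesis
  proof (cases "p * real m \<le> \<sigma>")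
    case True
    then have pH': "p * real H \<ge> p * real m" using pH by simp
    have "p * real m \<ge> p * (c * sqrt nr)" using hm p by (intro mult_left_mono) auto
    then have pm: "p * real m \<ge> TT" using hA by (simp add: mult.assoc)
    have "p * real m * kapL \<ge> 24" using pm kp unfolding TT_def by (simp add: field_simps)
    have a: "p * real H * kapL / \<sigma> - 12 / \<sigma> \<ge> kapL / 2 * (p * real m / \<sigma>)"
    proof -
      have "p * real H * kapL \<ge> p * real m * kapL" using pH' kp by (simp add: mult_right_mono)
      moreover have "kapL * (p * real m) = p * real m * kapL" by simp
      ultimately have "p * real H * kapL - 12 \<ge> kapL / 2 * (p * real m)" using \<open>p * real m * kapL \<ge> 24\<close> by linarith
      then have "(p * real H * kapL - 12) / \<sigma> \<ge> kapL / 2 * (p * real m) / \<sigma>" using s448 by (intro divide_right_mono) auto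
      then show ?thesis by (simp add: diff_divide_distrib)
    qed
    have b: "p * real m / \<sigma> \<ge> c * sqrt p"
    proof -
      have sq: "\<sigma> \<le> sqrt nr * sqrt p"
      proof -
        have "real b * (1 - p) \<le> nr" using hab p by (smt (verit) mult_left_le of_nat_0_le_iff)
        then have "real b * (1 - p) * p \<le> nr * p" using p by (intro mult_right_mono) auto
        then have "real b * p * (1 - p) \<le> nr * p" by (simp add: mult_ac)
        then show ?thesis unfolding \<sigma>_def by (metis real_sqrt_le_mono real_sqrt_mult)
      qed
      have sp: "sqrt p > 0" using p by simp
      have "c * sqrt p * \<sigma> \<le> c * sqrt p * (sqrt nr * sqrt p)" using sq c sp by (intro mult_left_mono) auto
      also have "\<dots> = p * (c * sqrt nr)" using p by (simp add: algebra_simps)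
      also have "\<dots> \<le> p * real m" using hm p by (intro mult_left_mono) auto
      finally show ?thesis using s448 by (simp add: field_simps)
    qed
    have "kapL / 2 * (p * real m / \<sigma>) \<ge> kapL / 2 * (c * sqrt p)" using b kp by (intro mult_left_mono) auto
    then show ?thesis using main a by simp
  next
    case False
    then have pH': "p * real H \<ge> \<sigma>" using pH by simp
    have "p * real H * kapL / \<sigma> \<ge> kapL" using pH' s448 kp by (simp add: field_simps mult_right_mono)
    moreover have "12 / \<sigma> \<le> kapL / 2"
    proof -
      have "12 / \<sigma> \<le> 12 / TT" using sT TT_ge by (intro divide_left_mono) auto
      also have "\<dots> = kapL / 2" unfolding TT_def using kp by simp
      finally show ?thesis .
    qed
    moreover have "kapL / 2 * c * sqrt p \<le> kapL / 2" using cp1 kp by (simp add: mult.assoc mult_left_le)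
    ultimately show ?thesis using main by linarith
  qed
qed


lemma TT_pos: "TT > 0" using TT_ge by linarith

lemma regime2:
  fixes p c nr :: real and b m :: nat
  assumes p: "0 < p" "p \<le> 1" and c: "0 < c" "c \<le> 1" and nr: "nr > 0"
    and hb: "nr \<le> 4 * real b" and hab: "real b + real m \<le> nr"
    and hm: "real m \<ge> c * sqrt nr" and hn: "c * sqrt nr \<ge> 32 * TT^2 + 1"
    and hp: "p * sqrt nr \<ge> 1"
    and sg: "sqrt (real b * p * (1 - p)) < TT"
  shows "G p (b + m) b \<ge> 3/4"
proof -
  have p01: "0 \<le> p" "p \<le> 1" using p by auto
  have Tp: "TT > 0" by (rule TT_pos)
  have lt: "real b * p * (1 - p) < TT^2"
  proof (rule ccontr)
    assume "\<not> ?thesis"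
    then have "sqrt (TT^2) \<le> sqrt (real b * p * (1 - p))" by (intro real_sqrt_le_mono) simp
    then show False using sg Tp by simp
  qed
  have "c * sqrt nr \<le> sqrt nr" using c nr by (intro mult_left_le_one_le) auto
  then have snr: "sqrt nr \<ge> 32 * TT^2 + 1" using hn by linarith
  have nrp: "nr * p \<ge> sqrt nr"
  proof -
    have "sqrt nr * sqrt nr = nr" using nr by simp
    then have "nr * p = sqrt nr * (p * sqrt nr)" by (metis mult.commute mult.left_commute)
    also have "\<dots> \<ge> sqrt nr * 1" using hp nr by (intro mult_left_mono) auto
    finally show ?thesis by simp
  qed
  have bp: "real b * p * (1 - p) \<ge> nr / 4 * p * (1 - p)"
  proof -
    have "nr / 4 \<le> real b" using hb by simp
    then show ?thesis using p by (intro mult_right_mono) auto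
  qed
  have phalf: "p > 1/2"
  proof (rule ccontr)
    assume "\<not> p > 1/2"
    then have "1 - p \<ge> 1/2" by simp
    then have "nr / 4 * p * (1 - p) \<ge> nr / 4 * p * (1/2)" using nr p by (intro mult_left_mono) auto
    then have "real b * p * (1 - p) \<ge> nr * p / 8" using bp by simp
    then have "real b * p * (1 - p) \<ge> (32 * TT^2 + 1) / 8" using nrp snr by simp
    moreover have "TT^2 \<ge> 0" by simp
    moreover have "(32 * TT^2 + 1) / 8 = 4 * TT^2 + 1/8" by simp
    ultimately show False using lt by linarith
  qed
  have n1p: "nr * (1 - p) < 8 * TT^2"
  proof -
    have "nr / 4 * p * (1 - p) \<ge> nr / 4 * (1/2) * (1 - p)" using nr p phalf
      by (intro mult_right_mono mult_left_mono) auto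
    then show ?thesis using bp lt by simp
  qed
  define a where "a = b + m"
  have step3: "G p a b \<ge> EB p a (\<lambda>i. if b + 2 \<le> i then 1 else 0)"
    unfolding G_def
  proof (intro EB_mono p01)
    fix i
    have "EB p b (\<lambda>j. if b + 2 \<le> i then 1 else 0) \<le> EB p b (\<lambda>j. if j + 2 \<le> i then 1 else 0)"
      by (intro EB_mono p01) auto
    then show "(if b + 2 \<le> i then 1 else 0) \<le> EB p b (\<lambda>j. if j + 2 \<le> i then 1 else 0)"
      by (simp add: EB_const)
  qed
  have m1: "real m - 1 \<ge> 32 * TT^2" using hm hn by simp
  have "32 * TT^2 > 0" using Tp by simp
  then have m1p: "real m - 1 > 0" using m1 by linarith
  have step4: "EB p a (\<lambda>i. if b + 2 \<le> i then 1 else 0) \<ge> EB p a (\<lambda>i. 1 - (real a - real i) / (real m - 1))"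
  proof (intro EB_mono p01)
    fix i assume ia: "i \<le> a"
    show "1 - (real a - real i) / (real m - 1) \<le> (if b + 2 \<le> i then 1 else 0)"
    proof (cases "b + 2 \<le> i")
      case True
      then show ?thesis using ia m1p by simp
    next
      case False
      then have "real a - real i \<ge> real m - 1" unfolding a_def by simp
      then show ?thesis using False m1p by (simp add: field_simps)
    qed
  qed
  have step5: "EB p a (\<lambda>i. 1 - (real a - real i) / (real m - 1)) = 1 - (real a - real a * p) / (real m - 1)"
  proof -
    have "EB p a (\<lambda>i. 1 - (real a - real i) / (real m - 1)) = EB p a (\<lambda>i. 1 + (- 1 / (real m - 1)) * (real a - real i))"
      by (intro arg_cong[where f="EB p a"] ext) (simp add: field_simps)
    also have "\<dots> = EB p a (\<lambda>i. 1) + EB p a (\<lambda>i. (- 1 / (real m - 1)) * (real a - real i))"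
      by (rule EB_add)
    also have "EB p a (\<lambda>i. (- 1 / (real m - 1)) * (real a - real i)) = (- 1 / (real m - 1)) * EB p a (\<lambda>i. real a - real i)"
      by (rule EB_cmult)
    also have "EB p a (\<lambda>i. real a - real i) = EB p a (\<lambda>i. real a) - EB p a (\<lambda>i. real i)"
      by (rule EB_diff)
    also have "EB p a (\<lambda>i. real i) = real a * p" by (rule EB_id)
    also have "EB p a (\<lambda>i. real a) = real a" by (rule EB_const)
    also have "EB p a (\<lambda>i. 1) = 1" by (rule EB_const)
    finally show ?thesis by (simp add: field_simps)
  qed
  have "real a - real a * p = real a * (1 - p)" by (simp add: algebra_simps)
  also have "\<dots> \<le> nr * (1 - p)" using hab p unfolding a_def by (intro mult_right_mono) auto
  finally have "real a - real a * p \<le> 8 * TT^2" using n1p by simp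
  then have "(real a - real a * p) / (real m - 1) \<le> 8 * TT^2 / (32 * TT^2)"
    using m1 m1p Tp by (intro frac_le) auto
  also have "\<dots> = 1/4" using Tp by simp
  finally show ?thesis using step3 step4 step5 unfolding a_def by linarith
qed

definition kap0 :: real where "kap0 = kapL / 2"

lemma core:
  fixes p c nr :: real and b m :: nat
  assumes p: "0 < p" "p \<le> 1" and c: "0 < c" "c \<le> 1" and nr: "nr > 0"
    and hb: "nr \<le> 4 * real b" and hab: "real b + real m \<le> nr"
    and hm: "real m \<ge> c * sqrt nr" and hA: "p * c * sqrt nr \<ge> TT"
    and hn: "c * sqrt nr \<ge> 32 * TT^2 + 1" and hp: "p * sqrt nr \<ge> 1"
  shows "G p (b + m) b \<ge> 1/2 + kap0 * c * sqrt p"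
proof (cases "sqrt (real b * p * (1 - p)) \<ge> TT")
  case True
  then show ?thesis using regime1[OF p c nr hb hab hm hA] unfolding kap0_def by simp
next
  case False
  then have "G p (b + m) b \<ge> 3/4" using regime2[OF p c nr hb hab hm hn hp] by simp
  moreover have "kap0 * c * sqrt p \<le> 1/4"
  proof -
    have "c * sqrt p \<le> 1" using c p by (simp add: mult_le_one)
    moreover have "kap0 \<le> 1/4" "kap0 \<ge> 0" using kapL_le kapL_pos unfolding kap0_def by auto
    ultimately have "kap0 * (c * sqrt p) \<le> kap0 * 1" by (intro mult_left_mono) auto
    then show ?thesis using \<open>kap0 \<le> 1/4\<close> by (simp add: mult.assoc)
  qed
  ultimately show ?thesis by linarith
qed


definition QW :: "real \<Rightarrow> 'a set \<Rightarrow> 'a set \<Rightarrow> real" where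
  "QW p A T = p ^ card T * (1 - p) ^ (card A - card T)"

definition FW :: "real \<Rightarrow> 'a set \<Rightarrow> ('a set \<Rightarrow> real) \<Rightarrow> real" where
  "FW p A g = (\<Sum>T\<in>Pow A. QW p A T * g T)"

lemma FW_cong: "(\<And>T. T \<subseteq> A \<Longrightarrow> g T = g' T) \<Longrightarrow> FW p A g = FW p A g'"
  unfolding FW_def by (rule sum.cong) auto

lemma FW_empty: "FW p {} g = g {}"
  unfolding FW_def QW_def by simp

lemma FW_insert:
  assumes A: "finite A" and x: "x \<notin> A"
  shows "FW p (insert x A) g = FW p A (\<lambda>T. (1 - p) * g T + p * g (insert x T))"
proof -
  have disj: "Pow A \<inter> insert x ` Pow A = {}" using x by auto
  have inj: "inj_on (insert x) (Pow A)" using x by (auto simp: inj_on_def)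
  have fin: "finite (Pow A)" using A by simp
  have cA: "card (insert x A) = Suc (card A)" using A x by simp
  have q1: "QW p (insert x A) T = (1 - p) * QW p A T" if "T \<subseteq> A" for T
  proof -
    have "card T \<le> card A" using that A by (simp add: card_mono)
    then have "Suc (card A) - card T = Suc (card A - card T)" by simp
    then show ?thesis unfolding QW_def cA by simp
  qed
  have q2: "QW p (insert x A) (insert x T) = p * QW p A T" if "T \<subseteq> A" for T
  proof -
    have fT: "finite T" using that A by (simp add: finite_subset)
    have xT: "x \<notin> T" using that x by auto
    have "card (insert x T) = Suc (card T)" using fT xT by simp
    then show ?thesis unfolding QW_def cA by simp
  qed
  have "FW p (insert x A) g = (\<Sum>T\<in>Pow A \<union> insert x ` Pow A. QW p (insert x A) T * g T)"
    unfolding FW_def by (simp add: Pow_insert)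
  also have "\<dots> = (\<Sum>T\<in>Pow A. QW p (insert x A) T * g T) + (\<Sum>T\<in>insert x ` Pow A. QW p (insert x A) T * g T)"
    using fin disj by (intro sum.union_disjoint) auto
  also have "(\<Sum>T\<in>insert x ` Pow A. QW p (insert x A) T * g T) = (\<Sum>T\<in>Pow A. QW p (insert x A) (insert x T) * g (insert x T))"
    using inj by (simp add: sum.reindex)
  also have "\<dots> = (\<Sum>T\<in>Pow A. p * QW p A T * g (insert x T))"
    by (rule sum.cong) (auto simp: q2)
  also have "(\<Sum>T\<in>Pow A. QW p (insert x A) T * g T) = (\<Sum>T\<in>Pow A. (1 - p) * QW p A T * g T)"
    by (rule sum.cong) (auto simp: q1)
  finally show ?thesis unfolding FW_def by (simp add: sum.distrib[symmetric] algebra_simps)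
qed

lemma FW_add: "FW p A (\<lambda>T. f T + g T) = FW p A f + FW p A g"
  unfolding FW_def by (simp add: sum.distrib algebra_simps)

lemma FW_cmult: "FW p A (\<lambda>T. c * f T) = c * FW p A f"
  unfolding FW_def by (simp add: sum_distrib_left algebra_simps)

lemma QW_nonneg: "0 \<le> p \<Longrightarrow> p \<le> 1 \<Longrightarrow> QW p A T \<ge> 0"
  unfolding QW_def by simp

lemma FW_mono: "0 \<le> p \<Longrightarrow> p \<le> 1 \<Longrightarrow> (\<And>T. T \<subseteq> A \<Longrightarrow> f T \<le> g T) \<Longrightarrow> FW p A f \<le> FW p A g"
  unfolding FW_def by (intro sum_mono mult_left_mono) (auto simp: QW_nonneg)

lemma FW_const: "finite A \<Longrightarrow> FW p A (\<lambda>_. c) = c"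
proof (induction A rule: finite_induct)
  case empty then show ?case by (simp add: FW_empty)
next
  case (insert x A) then show ?case by (simp add: FW_insert algebra_simps)
qed

lemma FW_card: "finite A \<Longrightarrow> FW p A (\<lambda>T. f (card T)) = EB p (card A) f"
proof (induction A arbitrary: f rule: finite_induct)
  case empty then show ?case by (simp add: FW_empty EB_def binp_def)
next
  case (insert x A f)
  have "FW p (insert x A) (\<lambda>T. f (card T)) = FW p A (\<lambda>T. (1 - p) * f (card T) + p * f (card (insert x T)))"
    using insert.hyps by (rule FW_insert)
  also have "\<dots> = FW p A (\<lambda>T. (1 - p) * f (card T) + p * f (Suc (card T)))"
  proof (rule FW_cong)
    fix T assume "T \<subseteq> A"
    then have "card (insert x T) = Suc (card T)" using insert by (metis card_insert_disjoint finite_subset subsetD)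
    then show "(1 - p) * f (card T) + p * f (card (insert x T)) = (1 - p) * f (card T) + p * f (Suc (card T))" by simp
  qed
  also have "\<dots> = (1 - p) * EB p (card A) f + p * EB p (card A) (\<lambda>i. f (Suc i))"
    using insert.IH[of f] insert.IH[of "\<lambda>i. f (Suc i)"] by (simp add: FW_add FW_cmult)
  also have "\<dots> = EB p (card (insert x A)) f" using insert by (simp add: EB_Suc algebra_simps)
  finally show ?case .
qed

lemma FW_union:
  assumes "finite A" "finite B" "A \<inter> B = {}"
  shows "FW p (A \<union> B) g = FW p A (\<lambda>X. FW p B (\<lambda>Y. g (X \<union> Y)))"
  using assms(2,1,3)
proof (induction B arbitrary: g rule: finite_induct)
  case empty then show ?case by (simp add: FW_empty)
next
  case (insert x B g)
  have xA: "x \<notin> A \<union> B" using insert by auto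
  have "FW p (A \<union> insert x B) g = FW p (insert x (A \<union> B)) g" by simp
  also have "\<dots> = FW p (A \<union> B) (\<lambda>T. (1 - p) * g T + p * g (insert x T))"
    using insert xA by (intro FW_insert) auto
  also have "\<dots> = FW p A (\<lambda>X. FW p B (\<lambda>Y. (1 - p) * g (X \<union> Y) + p * g (insert x (X \<union> Y))))"
    using insert by (intro insert.IH) auto
  also have "\<dots> = FW p A (\<lambda>X. FW p (insert x B) (\<lambda>Y. g (X \<union> Y)))"
    using insert by (intro FW_cong) (simp add: FW_insert)
  finally show ?case .
qed

lemma FW_image:
  assumes "finite A" "inj_on f A"
  shows "FW p (f ` A) g = FW p A (\<lambda>T. g (f ` T))"
  using assms
proof (induction A arbitrary: g rule: finite_induct)
  case empty then show ?case by (simp add: FW_empty)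
next
  case (insert x A g)
  have inj: "inj_on f A" and fx: "f x \<notin> f ` A" using insert by auto
  have "FW p (f ` insert x A) g = FW p (insert (f x) (f ` A)) g" by simp
  also have "\<dots> = FW p (f ` A) (\<lambda>T. (1 - p) * g T + p * g (insert (f x) T))"
    using insert fx by (intro FW_insert) auto
  also have "\<dots> = FW p A (\<lambda>T. (1 - p) * g (f ` T) + p * g (insert (f x) (f ` T)))"
    using insert.IH[OF inj] .
  also have "\<dots> = FW p (insert x A) (\<lambda>T. g (f ` T))"
    using insert by (simp add: FW_insert)
  finally show ?case .
qed

lemma FW_delta:
  assumes "finite A" "G0 \<subseteq> A"
  shows "FW p A (\<lambda>X. if X = G0 then c else 0) = QW p A G0 * c"
proof -
  have "FW p A (\<lambda>X. if X = G0 then c else 0) = (\<Sum>T\<in>Pow A. if T = G0 then QW p A T * c else 0)"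
    unfolding FW_def by (rule sum.cong) auto
  also have "\<dots> = QW p A G0 * c" using assms by (simp add: sum.delta)
  finally show ?thesis .
qed


lemma FW_sigma:
  fixes \<sigma> :: "'a \<Rightarrow> int"
  assumes W: "finite W" and s: "\<forall>w\<in>W. \<sigma> w \<in> {-1, 1}"
  shows "FW p W (\<lambda>T. if (\<Sum>w\<in>T. \<sigma> w) \<ge> 2 then 1 else 0) =
         G p (card {w\<in>W. \<sigma> w = 1}) (card {w\<in>W. \<sigma> w = -1})"
proof -
  define Wp where "Wp = {w\<in>W. \<sigma> w = 1}"
  define Wm where "Wm = {w\<in>W. \<sigma> w = -1}"
  have fp: "finite Wp" "finite Wm" unfolding Wp_def Wm_def using W by auto
  have dj: "Wp \<inter> Wm = {}" unfolding Wp_def Wm_def by auto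
  have un: "W = Wp \<union> Wm" unfolding Wp_def Wm_def using s by auto
  have key: "(\<Sum>w\<in>X \<union> Y. \<sigma> w) = int (card X) - int (card Y)" if "X \<subseteq> Wp" "Y \<subseteq> Wm" for X Y
  proof -
    have fX: "finite X" "finite Y" using that fp finite_subset by auto
    have "X \<inter> Y = {}" using that dj by auto
    then have "(\<Sum>w\<in>X \<union> Y. \<sigma> w) = (\<Sum>w\<in>X. \<sigma> w) + (\<Sum>w\<in>Y. \<sigma> w)" using fX by (simp add: sum.union_disjoint)
    moreover have "(\<Sum>w\<in>X. \<sigma> w) = (\<Sum>w\<in>X. 1)" using that unfolding Wp_def by (intro sum.cong) auto
    moreover have "(\<Sum>w\<in>Y. \<sigma> w) = (\<Sum>w\<in>Y. -1)" using that unfolding Wm_def by (intro sum.cong) auto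
    ultimately show ?thesis by simp
  qed
  have "FW p W (\<lambda>T. if (\<Sum>w\<in>T. \<sigma> w) \<ge> 2 then 1 else 0) =
        FW p Wp (\<lambda>X. FW p Wm (\<lambda>Y. if (\<Sum>w\<in>X \<union> Y. \<sigma> w) \<ge> 2 then 1 else 0))"
    unfolding un using fp dj by (rule FW_union)
  also have "\<dots> = FW p Wp (\<lambda>X. FW p Wm (\<lambda>Y. (\<lambda>j. if j + 2 \<le> card X then 1 else 0) (card Y)))"
  proof (intro FW_cong)
    fix X Y assume "X \<subseteq> Wp" "Y \<subseteq> Wm"
    then show "(if (\<Sum>w\<in>X \<union> Y. \<sigma> w) \<ge> 2 then 1 else 0) = (\<lambda>j. if j + 2 \<le> card X then 1 else (0::real)) (card Y)"
      using key by auto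
  qed
  also have "\<dots> = FW p Wp (\<lambda>X. (\<lambda>i. EB p (card Wm) (\<lambda>j. if j + 2 \<le> i then 1 else 0)) (card X))"
    using fp by (intro FW_cong) (rule FW_card)
  also have "\<dots> = G p (card Wp) (card Wm)" unfolding G_def
    using FW_card[OF fp(1), of p "\<lambda>i. EB p (card Wm) (\<lambda>j. if j + 2 \<le> i then 1 else 0)"] by simp
  finally show ?thesis unfolding Wp_def Wm_def .
qed


lemma finite_pairs: "finite (pairs n)"
proof -
  have "pairs n \<subseteq> Pow (Vn n)" unfolding pairs_def by auto
  moreover have "finite (Pow (Vn n))" unfolding Vn_def by simp
  ultimately show ?thesis by (rule finite_subset)
qed

lemma gnp_prob_QW: "gnp_prob n p E = QW p (pairs n) E"
  unfolding gnp_prob_def QW_def ..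

lemma sum_graphs_FW:
  "(\<Sum>E\<in>{E\<in>graphs n. A E}. gnp_prob n p E * h E) = FW p (pairs n) (\<lambda>E. if A E then h E else 0)"
proof -
  have "(\<Sum>E\<in>{E\<in>graphs n. A E}. gnp_prob n p E * h E) = (\<Sum>E\<in>Pow (pairs n). if A E then gnp_prob n p E * h E else 0)"
  proof -
    have "{E\<in>graphs n. A E} = {E \<in> Pow (pairs n). A E}" unfolding graphs_def by simp
    then show ?thesis using sum.inter_filter[of "Pow (pairs n)" "\<lambda>E. gnp_prob n p E * h E" A] finite_pairs by simp
  qed
  also have "\<dots> = FW p (pairs n) (\<lambda>E. if A E then h E else 0)"
    unfolding FW_def gnp_prob_QW by (rule sum.cong) auto
  finally show ?thesis .
qed

lemma in_pairs: "{a, b} \<in> pairs n \<longleftrightarrow> a \<in> Vn n \<and> b \<in> Vn n \<and> a \<noteq> b"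
  unfolding pairs_def by (auto simp: doubleton_eq_iff)

context
  fixes n :: nat and u v :: nat and \<Gamma> :: "nat set"
  assumes v: "v \<in> Vn n" and \<Gamma>: "\<Gamma> \<subseteq> Vn n - {v}" and u: "u \<in> \<Gamma>"
begin

definition "sv = (\<lambda>x. {v, x}) ` (Vn n - {v})"
definition "WW = Vn n - {u, v}"
definition "su = (\<lambda>w. {u, w}) ` WW"
definition "RR = pairs n - sv - su"
definition "G0 = (\<lambda>x. {v, x}) ` \<Gamma>"

lemma uv: "u \<noteq> v" "u \<in> Vn n" using u \<Gamma> by auto

lemma fin_sets: "finite sv" "finite su" "finite RR" "finite WW"
  unfolding sv_def su_def RR_def WW_def Vn_def using finite_pairs by auto

lemma sv_sub: "sv \<subseteq> pairs n" unfolding sv_def using v by (auto simp: in_pairs)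
lemma su_sub: "su \<subseteq> pairs n" unfolding su_def WW_def using uv by (auto simp: in_pairs)

lemma disj1: "sv \<inter> (su \<union> RR) = {}"
  unfolding sv_def su_def RR_def WW_def using uv by (auto simp: doubleton_eq_iff)

lemma disj2: "su \<inter> RR = {}" unfolding RR_def by auto

lemma pairs_split: "pairs n = sv \<union> (su \<union> RR)"
  using sv_sub su_sub unfolding RR_def by auto

lemma G0_sub: "G0 \<subseteq> sv" unfolding G0_def sv_def using \<Gamma> by auto

lemma nbhd_v:
  assumes X: "X \<subseteq> sv" and Y: "Y \<subseteq> su" and Z: "Z \<subseteq> RR"
  shows "nbhd (X \<union> (Y \<union> Z)) v = \<Gamma> \<longleftrightarrow> X = G0"
proof -
  have e1: "nbhd (X \<union> (Y \<union> Z)) v = nbhd X v"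
  proof -
    have "{v, w} \<notin> Y" for w
    proof
      assume "{v, w} \<in> Y"
      then obtain t where "t \<in> WW" "{v, w} = {u, t}" using Y unfolding su_def by auto
      then show False using uv unfolding WW_def by (auto simp: doubleton_eq_iff)
    qed
    moreover have "{v, w} \<notin> Z" for w
    proof
      assume "{v, w} \<in> Z"
      then have "{v, w} \<in> pairs n" "{v, w} \<notin> sv" using Z unfolding RR_def by auto
      then show False unfolding sv_def by (auto simp: in_pairs)
    qed
    ultimately show ?thesis unfolding nbhd_def by auto
  qed
  have e2: "nbhd G0 v = \<Gamma>"
    unfolding nbhd_def G0_def using \<Gamma> by (auto simp: doubleton_eq_iff)
  show ?thesis
  proof
    assume h: "nbhd (X \<union> (Y \<union> Z)) v = \<Gamma>"
    then have h': "nbhd X v = \<Gamma>" using e1 by simp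
    show "X = G0"
    proof
      show "X \<subseteq> G0"
      proof
        fix e assume "e \<in> X"
        then obtain x where "x \<in> Vn n - {v}" "e = {v, x}" using X unfolding sv_def by auto
        then have "x \<in> nbhd X v" using \<open>e \<in> X\<close> unfolding nbhd_def by simp
        then show "e \<in> G0" using h' \<open>e = {v, x}\<close> unfolding G0_def by auto
      qed
      show "G0 \<subseteq> X"
      proof
        fix e assume "e \<in> G0"
        then obtain x where "x \<in> \<Gamma>" "e = {v, x}" unfolding G0_def by auto
        then show "e \<in> X" using h' unfolding nbhd_def by auto
      qed
    qed
  next
    assume "X = G0"
    then show "nbhd (X \<union> (Y \<union> Z)) v = \<Gamma>" using e1 e2 by simp
  qed
qed


lemma nbhd_u:
  assumes Y: "Y \<subseteq> su" and Z: "Z \<subseteq> RR"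
  shows "nbhd (G0 \<union> (Y \<union> Z)) u = insert v (nbhd Y u)"
proof -
  have a: "{u, w} \<in> G0 \<longleftrightarrow> w = v" for w
    unfolding G0_def using u uv by (auto simp: doubleton_eq_iff)
  have b: "{u, w} \<notin> Z" for w
  proof
    assume "{u, w} \<in> Z"
    then have h: "{u, w} \<in> pairs n" "{u, w} \<notin> sv" "{u, w} \<notin> su" using Z unfolding RR_def by auto
    then have w: "w \<in> Vn n" "w \<noteq> u" by (auto simp: in_pairs)
    show False
    proof (cases "w = v")
      case True
      then have "{u, w} = {v, u}" by auto
      then show False using h(2) uv unfolding sv_def by auto
    next
      case False
      then show False using h(3) w unfolding su_def WW_def by auto
    qed
  qed
  show ?thesis unfolding nbhd_def using a b by auto
qed

lemma nbhd_Y_sub: "Y \<subseteq> su \<Longrightarrow> nbhd Y u \<subseteq> WW"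
  unfolding nbhd_def su_def WW_def using uv by (auto simp: doubleton_eq_iff)

lemma nbhd_img: "T \<subseteq> WW \<Longrightarrow> nbhd ((\<lambda>w. {u, w}) ` T) u = T"
  unfolding nbhd_def WW_def by (auto simp: doubleton_eq_iff)

lemma inj_su: "inj_on (\<lambda>w. {u, w}) WW"
  unfolding inj_on_def WW_def by (auto simp: doubleton_eq_iff)

lemma FW_decomp:
  "FW p (pairs n) g = FW p sv (\<lambda>X. FW p su (\<lambda>Y. FW p RR (\<lambda>Z. g (X \<union> (Y \<union> Z)))))"
proof -
  have "FW p (pairs n) g = FW p sv (\<lambda>X. FW p (su \<union> RR) (\<lambda>W. g (X \<union> W)))"
    unfolding pairs_split using fin_sets disj1 by (intro FW_union) auto
  also have "\<dots> = FW p sv (\<lambda>X. FW p su (\<lambda>Y. FW p RR (\<lambda>Z. g (X \<union> (Y \<union> Z)))))"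
    using fin_sets disj2 by (intro FW_cong FW_union) auto
  finally show ?thesis .
qed

lemma state_one:
  fixes \<sigma>0 :: "nat \<Rightarrow> int"
  assumes T: "finite T" "v \<notin> T" and s: "(\<Sum>w\<in>T. \<sigma>0 w) \<ge> 2" and sv1: "\<sigma>0 v \<in> {-1, 1}"
    and N: "nbhd E u = insert v T"
  shows "state E \<sigma>0 1 u = 1"
proof -
  have "(\<Sum>w\<in>nbhd E u. \<sigma>0 w) = \<sigma>0 v + (\<Sum>w\<in>T. \<sigma>0 w)" unfolding N using T by simp
  then have "(\<Sum>w\<in>nbhd E u. \<sigma>0 w) > 0" using s sv1 by auto
  then show ?thesis unfolding state_def maj_step_def by (simp add: Let_def)
qed

lemma denom:
  assumes p: "0 \<le> p" "p \<le> 1"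
  shows "FW p (pairs n) (\<lambda>E. if nbhd E v = \<Gamma> then 1 else 0) = QW p sv G0"
proof -
  have "FW p (pairs n) (\<lambda>E. if nbhd E v = \<Gamma> then 1 else 0) =
        FW p sv (\<lambda>X. FW p su (\<lambda>Y. FW p RR (\<lambda>Z. if nbhd (X \<union> (Y \<union> Z)) v = \<Gamma> then 1 else 0)))"
    by (rule FW_decomp)
  also have "\<dots> = FW p sv (\<lambda>X. if X = G0 then 1 else 0)"
  proof (rule FW_cong)
    fix X assume X: "X \<subseteq> sv"
    have "FW p su (\<lambda>Y. FW p RR (\<lambda>Z. if nbhd (X \<union> (Y \<union> Z)) v = \<Gamma> then 1 else 0)) =
          FW p su (\<lambda>Y. FW p RR (\<lambda>Z. if X = G0 then 1 else 0))"
      using nbhd_v[OF X] by (intro FW_cong) auto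
    also have "\<dots> = (if X = G0 then 1 else 0)" using fin_sets by (simp add: FW_const)
    finally show "FW p su (\<lambda>Y. FW p RR (\<lambda>Z. if nbhd (X \<union> (Y \<union> Z)) v = \<Gamma> then 1 else 0)) = (if X = G0 then 1 else 0)" .
  qed
  also have "\<dots> = QW p sv G0 * 1" using fin_sets G0_sub by (intro FW_delta) auto
  finally show ?thesis by simp
qed

lemma numer:
  fixes \<sigma>0 :: "nat \<Rightarrow> int"
  assumes p: "0 \<le> p" "p \<le> 1" and s: "\<forall>w\<in>Vn n. \<sigma>0 w \<in> {-1, 1}"
  shows "FW p (pairs n) (\<lambda>E. if nbhd E v = \<Gamma> then (if state E \<sigma>0 1 u = 1 then 1 else 0) else 0)
         \<ge> QW p sv G0 * FW p WW (\<lambda>T. if (\<Sum>w\<in>T. \<sigma>0 w) \<ge> 2 then 1 else 0)"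
proof -
  define k where "k T = (if (\<Sum>w\<in>T. \<sigma>0 w) \<ge> 2 then 1 else (0::real))" for T
  define C where "C = FW p WW k"
  have "FW p (pairs n) (\<lambda>E. if nbhd E v = \<Gamma> then (if state E \<sigma>0 1 u = 1 then 1 else 0) else 0) =
        FW p sv (\<lambda>X. FW p su (\<lambda>Y. FW p RR (\<lambda>Z. if nbhd (X \<union> (Y \<union> Z)) v = \<Gamma> then (if state (X \<union> (Y \<union> Z)) \<sigma>0 1 u = 1 then 1 else 0) else 0)))"
    by (rule FW_decomp)
  also have "\<dots> \<ge> FW p sv (\<lambda>X. if X = G0 then C else 0)"
  proof (rule FW_mono[OF p])
    fix X assume X: "X \<subseteq> sv"
    show "(if X = G0 then C else 0) \<le> FW p su (\<lambda>Y. FW p RR (\<lambda>Z. if nbhd (X \<union> (Y \<union> Z)) v = \<Gamma> then (if state (X \<union> (Y \<union> Z)) \<sigma>0 1 u = 1 then 1 else 0) else 0))"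
    proof (cases "X = G0")
      case False
      have "FW p su (\<lambda>Y. FW p RR (\<lambda>Z. if nbhd (X \<union> (Y \<union> Z)) v = \<Gamma> then (if state (X \<union> (Y \<union> Z)) \<sigma>0 1 u = 1 then 1 else 0) else 0))
          = FW p su (\<lambda>Y. FW p RR (\<lambda>Z. 0))"
        using nbhd_v[OF X] False by (intro FW_cong) auto
      also have "\<dots> = 0" using fin_sets by (simp add: FW_const)
      finally show ?thesis using False by simp
    next
      case True
      have "C = FW p su (\<lambda>Y. k (nbhd Y u))"
      proof -
        have "FW p su (\<lambda>Y. k (nbhd Y u)) = FW p WW (\<lambda>T. k (nbhd ((\<lambda>w. {u, w}) ` T) u))"
          unfolding su_def using fin_sets inj_su by (intro FW_image) auto
        also have "\<dots> = FW p WW k" by (intro FW_cong) (simp add: nbhd_img)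
        finally show ?thesis unfolding C_def by simp
      qed
      also have "\<dots> = FW p su (\<lambda>Y. FW p RR (\<lambda>Z. k (nbhd Y u)))" using fin_sets by (simp add: FW_const)
      also have "\<dots> \<le> FW p su (\<lambda>Y. FW p RR (\<lambda>Z. if nbhd (X \<union> (Y \<union> Z)) v = \<Gamma> then (if state (X \<union> (Y \<union> Z)) \<sigma>0 1 u = 1 then 1 else 0) else 0))"
      proof (intro FW_mono[OF p])
        fix Y Z assume Y: "Y \<subseteq> su" and Z: "Z \<subseteq> RR"
        have nv: "nbhd (X \<union> (Y \<union> Z)) v = \<Gamma>" using nbhd_v[OF X Y Z] True by simp
        show "k (nbhd Y u) \<le> (if nbhd (X \<union> (Y \<union> Z)) v = \<Gamma> then (if state (X \<union> (Y \<union> Z)) \<sigma>0 1 u = 1 then 1 else 0) else 0)"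
        proof (cases "(\<Sum>w\<in>nbhd Y u. \<sigma>0 w) \<ge> 2")
          case True
          have sub: "nbhd Y u \<subseteq> WW" using nbhd_Y_sub[OF Y] .
          have fin: "finite (nbhd Y u)" using sub fin_sets finite_subset by blast
          have vn: "v \<notin> nbhd Y u" using sub unfolding WW_def by auto
          have sv1: "\<sigma>0 v \<in> {-1, 1}" using s v by auto
          have Nu: "nbhd (X \<union> (Y \<union> Z)) u = insert v (nbhd Y u)" using nbhd_u[OF Y Z] \<open>X = G0\<close> by simp
          have "state (X \<union> (Y \<union> Z)) \<sigma>0 1 u = 1"
            by (rule state_one[OF fin vn True sv1 Nu])
          then show ?thesis using nv unfolding k_def by simp
        next
          case False
          then show ?thesis unfolding k_def by simp
        qed
      qed
      finally show ?thesis using True by simp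
    qed
  qed
  also have "FW p sv (\<lambda>X. if X = G0 then C else 0) = QW p sv G0 * C"
    using fin_sets G0_sub by (intro FW_delta) auto
  finally show ?thesis unfolding C_def k_def .
qed

end




lemma card_filter_sum: "finite A \<Longrightarrow> real (card {x\<in>A. P x}) = (\<Sum>x\<in>A. if P x then 1 else 0)"
  by (simp add: sum.inter_filter[symmetric])

lemma cond_exp_bound:
  fixes \<sigma>0 :: "nat \<Rightarrow> int"
  assumes v: "v \<in> Vn n" and \<Gamma>: "\<Gamma> \<subseteq> Vn n - {v}" and p: "0 \<le> p" "p \<le> 1"
    and s: "\<forall>w\<in>Vn n. \<sigma>0 w \<in> {-1, 1}" and D: "gnp_P n p (\<lambda>E. nbhd E v = \<Gamma>) > 0"
  shows "gnp_cond_exp n p (\<lambda>E. X2 E \<sigma>0 v) (\<lambda>E. nbhd E v = \<Gamma>) \<ge>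
         (\<Sum>u\<in>\<Gamma>. G p (card {w\<in>Vn n - {u, v}. \<sigma>0 w = 1}) (card {w\<in>Vn n - {u, v}. \<sigma>0 w = -1}))"
proof -
  define Dn where "Dn = gnp_P n p (\<lambda>E. nbhd E v = \<Gamma>)"
  have finG: "finite \<Gamma>" using \<Gamma> unfolding Vn_def by (auto intro: finite_subset)
  have Dfw: "Dn = FW p (pairs n) (\<lambda>E. if nbhd E v = \<Gamma> then 1 else 0)"
    unfolding Dn_def gnp_P_def using sum_graphs_FW[where A="\<lambda>E. nbhd E v = \<Gamma>" and h="\<lambda>_. 1"] by simp
  define ind where "ind u E = (if state E \<sigma>0 1 u = 1 then 1 else (0::real))" for u E
  define Fu where "Fu u = FW p (Vn n - {u, v}) (\<lambda>T. if (\<Sum>w\<in>T. \<sigma>0 w) \<ge> 2 then 1 else 0)" for u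
  have num: "(\<Sum>E\<in>{E\<in>graphs n. nbhd E v = \<Gamma>}. gnp_prob n p E * X2 E \<sigma>0 v) =
             (\<Sum>u\<in>\<Gamma>. FW p (pairs n) (\<lambda>E. if nbhd E v = \<Gamma> then ind u E else 0))"
  proof -
    have "(\<Sum>E\<in>{E\<in>graphs n. nbhd E v = \<Gamma>}. gnp_prob n p E * X2 E \<sigma>0 v) =
          (\<Sum>E\<in>{E\<in>graphs n. nbhd E v = \<Gamma>}. gnp_prob n p E * (\<Sum>u\<in>\<Gamma>. ind u E))"
    proof (rule sum.cong)
      fix E assume "E \<in> {E\<in>graphs n. nbhd E v = \<Gamma>}"
      then have "nbhd E v = \<Gamma>" by simp
      then show "gnp_prob n p E * X2 E \<sigma>0 v = gnp_prob n p E * (\<Sum>u\<in>\<Gamma>. ind u E)"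
        unfolding X2_def ind_def using card_filter_sum[OF finG] by simp
    qed simp
    also have "\<dots> = (\<Sum>u\<in>\<Gamma>. \<Sum>E\<in>{E\<in>graphs n. nbhd E v = \<Gamma>}. gnp_prob n p E * ind u E)"
      by (simp add: sum_distrib_left sum.swap[of _ \<Gamma>])
    also have "\<dots> = (\<Sum>u\<in>\<Gamma>. FW p (pairs n) (\<lambda>E. if nbhd E v = \<Gamma> then ind u E else 0))"
      by (simp add: sum_graphs_FW)
    finally show ?thesis .
  qed
  have each: "FW p (pairs n) (\<lambda>E. if nbhd E v = \<Gamma> then ind u E else 0) \<ge> Dn * Fu u" if u: "u \<in> \<Gamma>" for u
  proof -
    have "FW p (pairs n) (\<lambda>E. if nbhd E v = \<Gamma> then ind u E else 0) \<ge>
          QW p (sv n v) (G0 v \<Gamma>) * FW p (WW n u v) (\<lambda>T. if (\<Sum>w\<in>T. \<sigma>0 w) \<ge> 2 then 1 else 0)"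
      unfolding ind_def by (rule numer[OF v \<Gamma> u p s])
    moreover have "Dn = QW p (sv n v) (G0 v \<Gamma>)" unfolding Dfw by (rule denom[OF v \<Gamma> u p])
    ultimately show ?thesis unfolding Fu_def using WW_def[OF v \<Gamma> u] by simp
  qed
  have Fu_G: "Fu u = G p (card {w\<in>Vn n - {u, v}. \<sigma>0 w = 1}) (card {w\<in>Vn n - {u, v}. \<sigma>0 w = -1})" for u
    unfolding Fu_def by (rule FW_sigma) (use s in \<open>auto simp: Vn_def\<close>)
  have Dpos: "Dn > 0" using D unfolding Dn_def .
  have "(\<Sum>E\<in>{E\<in>graphs n. nbhd E v = \<Gamma>}. gnp_prob n p E * X2 E \<sigma>0 v) \<ge> (\<Sum>u\<in>\<Gamma>. Dn * Fu u)"
    unfolding num using each by (intro sum_mono) auto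
  then have "(\<Sum>E\<in>{E\<in>graphs n. nbhd E v = \<Gamma>}. gnp_prob n p E * X2 E \<sigma>0 v) / Dn \<ge> (\<Sum>u\<in>\<Gamma>. Fu u)"
    using Dpos by (simp add: sum_distrib_left[symmetric] pos_le_divide_eq mult.commute)
  then show ?thesis unfolding gnp_cond_exp_def Dn_def[symmetric] using Fu_G by simp
qed


lemma phi_props: "real_of_int (phi n x) \<ge> x \<and> real_of_int (phi n x) < x + 2"
proof -
  define k0 where "k0 = \<lceil>x\<rceil>"
  define kk where "kk = (if k0 mod 2 = int n mod 2 then k0 else k0 + 1)"
  define P where "P k = (real_of_int k \<ge> x \<and> k mod 2 = int n mod 2 \<and>
      (\<forall>j::int. real_of_int j \<ge> x \<and> j mod 2 = int n mod 2 \<longrightarrow> k \<le> j))" for k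
  have Pkk: "P kk"
  proof -
    have a0: "x \<le> real_of_int \<lceil>x\<rceil>" by (rule le_of_int_ceiling)
    have "kk \<ge> k0" unfolding kk_def by auto
    then have "real_of_int kk \<ge> real_of_int k0" by simp
    then have a: "real_of_int kk \<ge> x" using a0 unfolding k0_def by linarith
    have b: "kk mod 2 = int n mod 2" unfolding kk_def by presburger
    have c: "kk \<le> j" if "real_of_int j \<ge> x" "j mod 2 = int n mod 2" for j
    proof -
      have "j \<ge> k0" unfolding k0_def using that(1) by (simp add: ceiling_le_iff)
      moreover have "j \<noteq> k0 \<or> kk = k0" unfolding kk_def using that(2) by auto
      ultimately show ?thesis unfolding kk_def by auto
    qed
    show ?thesis unfolding P_def using a b c by blast
  qed
  have uniq: "k = kk" if "P k" for k
    using that Pkk unfolding P_def by (meson order_antisym)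
  have "phi n x = kk"
    unfolding phi_def using Pkk uniq unfolding P_def by (intro the_equality) blast+
  moreover have "real_of_int kk < x + 2"
  proof -
    have "real_of_int \<lceil>x\<rceil> < x + 1" using ceiling_correct[of x] by linarith
    moreover have "kk \<le> k0 + 1" unfolding kk_def by auto
    ultimately show ?thesis unfolding k0_def by (smt (verit) of_int_le_iff of_int_add of_int_1)
  qed
  ultimately show ?thesis using Pkk unfolding P_def by simp
qed


lemma per_u:
  fixes \<sigma>0 :: "nat \<Rightarrow> int" and c p :: real
  assumes c: "0 < c" "c \<le> 1" and hn: "c * sqrt (real n) \<ge> 32 * TT^2 + 1"
    and p: "0 < p" "p \<le> 1" and hA: "p * c * sqrt (real n) \<ge> TT" and hp: "p * sqrt (real n) \<ge> 1"
    and v: "v \<in> Vn n" and u: "u \<in> Vn n" and uv: "u \<noteq> v"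
    and s: "\<forall>w\<in>Vn n. \<sigma>0 w \<in> {-1, 1}"
    and S1: "real_of_int (\<Sum>w\<in>Vn n. \<sigma>0 w) \<ge> 2 * c * sqrt (real n)"
    and S2: "real_of_int (\<Sum>w\<in>Vn n. \<sigma>0 w) < 2 * c * sqrt (real n) + 2"
  shows "G p (card {w\<in>Vn n - {u, v}. \<sigma>0 w = 1}) (card {w\<in>Vn n - {u, v}. \<sigma>0 w = -1}) \<ge> 1/2 + kap0 * c * sqrt p"
proof -
  define W where "W = Vn n - {u, v}"
  define Wp where "Wp = {w\<in>W. \<sigma>0 w = 1}"
  define Wm where "Wm = {w\<in>W. \<sigma>0 w = -1}"
  have finV: "finite (Vn n)" unfolding Vn_def by simp
  have finW: "finite W" "finite Wp" "finite Wm" unfolding W_def Wp_def Wm_def using finV by auto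
  have cV: "card (Vn n) = n" unfolding Vn_def by simp
  have cW: "card W = n - 2" unfolding W_def using u v uv finV cV by (simp add: card_Diff_subset)
  have dj: "Wp \<inter> Wm = {}" unfolding Wp_def Wm_def by auto
  have un: "W = Wp \<union> Wm" unfolding Wp_def Wm_def W_def using s by auto
  have cpm: "card Wp + card Wm = card W" using finW dj un by (simp add: card_Un_disjoint)
  have sW: "(\<Sum>w\<in>W. \<sigma>0 w) = int (card Wp) - int (card Wm)"
  proof -
    have "(\<Sum>w\<in>W. \<sigma>0 w) = (\<Sum>w\<in>Wp. \<sigma>0 w) + (\<Sum>w\<in>Wm. \<sigma>0 w)" unfolding un using finW dj by (simp add: sum.union_disjoint)
    moreover have "(\<Sum>w\<in>Wp. \<sigma>0 w) = (\<Sum>w\<in>Wp. 1)" unfolding Wp_def by (intro sum.cong) auto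
    moreover have "(\<Sum>w\<in>Wm. \<sigma>0 w) = (\<Sum>w\<in>Wm. -1)" unfolding Wm_def by (intro sum.cong) auto
    ultimately show ?thesis by simp
  qed
  have sV: "(\<Sum>w\<in>Vn n. \<sigma>0 w) = \<sigma>0 u + \<sigma>0 v + (\<Sum>w\<in>W. \<sigma>0 w)"
  proof -
    have "Vn n = insert u (insert v W)" unfolding W_def using u v by auto
    moreover have "u \<notin> insert v W" "v \<notin> W" unfolding W_def using uv by auto
    ultimately show ?thesis using finW by simp
  qed
  have su: "\<sigma>0 u \<in> {-1, 1}" "\<sigma>0 v \<in> {-1, 1}" using s u v by auto
  define D where "D = real (card Wp) - real (card Wm)"
  have D: "D = real_of_int (\<Sum>w\<in>Vn n. \<sigma>0 w) - real_of_int (\<sigma>0 u) - real_of_int (\<sigma>0 v)"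
    unfolding D_def using sV sW by simp
  have su': "\<bar>real_of_int (\<sigma>0 u)\<bar> \<le> 1" "\<bar>real_of_int (\<sigma>0 v)\<bar> \<le> 1" using su by auto
  have T448: "TT \<ge> 448" by (rule TT_ge)
  have "TT * TT \<ge> 448 * 1" using T448 by (intro mult_mono) auto
  then have TT2: "32 * TT^2 + 1 \<ge> 449" by (simp add: power2_eq_square)
  have cn: "c * sqrt (real n) \<ge> 449" using hn TT2 by linarith
  have su'': "real_of_int (\<sigma>0 u) \<le> 1" "real_of_int (\<sigma>0 v) \<le> 1" "real_of_int (\<sigma>0 u) \<ge> -1" "real_of_int (\<sigma>0 v) \<ge> -1"
    using su' by (auto simp: abs_le_iff)
  have D1: "D \<ge> c * sqrt (real n)" using D S1 su'' cn by linarith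
  have D2: "D \<le> 2 * c * sqrt (real n) + 4" using D S2 su'' by linarith
  have ge: "card Wm \<le> card Wp" using D1 cn unfolding D_def by linarith
  define m where "m = card Wp - card Wm"
  define b where "b = card Wm"
  have Wpbm: "card Wp = b + m" unfolding m_def b_def using ge by simp
  have mD: "real m = D" unfolding m_def D_def using ge by (simp add: of_nat_diff)
  have "c * sqrt (real n) \<le> sqrt (real n)" using c by (intro mult_left_le_one_le) auto
  then have sn: "sqrt (real n) \<ge> 449" using cn by linarith
  have nsq: "real n = sqrt (real n) * sqrt (real n)" by simp
  have nr: "real n > 0" using sn by (cases n) auto
  have n2: "n \<ge> 2"
  proof -
    have "card {u, v} \<le> card (Vn n)" using u v finV by (intro card_mono) auto
    then show ?thesis using uv cV by simp
  qed
  have hab: "real b + real m \<le> real n" using cpm cW Wpbm n2 unfolding b_def by simp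
  have hb: "real n \<le> 4 * real b"
  proof -
    have "real b + real b + real m = real n - 2" using cpm cW Wpbm n2 unfolding b_def by simp
    moreover have "2 * sqrt (real n) + 6 \<le> real n / 2"
    proof -
      have "449 * sqrt (real n) \<le> sqrt (real n) * sqrt (real n)" using sn by (intro mult_right_mono) auto
      then show ?thesis using sn nsq by linarith
    qed
    moreover have "c * sqrt (real n) \<le> sqrt (real n)" using c sn by (intro mult_left_le_one_le) auto
    ultimately show ?thesis using mD D2 by linarith
  qed
  have "G p (b + m) b \<ge> 1/2 + kap0 * c * sqrt p"
    by (rule core[OF p c nr hb hab _ hA hn hp]) (use mD D1 in linarith)
  then have "G p (card Wp) (card Wm) \<ge> 1/2 + kap0 * c * sqrt p" unfolding Wpbm b_def .
  then show ?thesis unfolding Wp_def Wm_def W_def .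
qed


lemma powr23:
  fixes d :: real assumes d: "d \<ge> 8"
  shows "d powr (2/3) \<le> d / 2"
proof -
  have dp: "d > 0" using d by simp
  have e8: "(8::real) powr (1/3) = 2"
  proof -
    have "(8::real) = 2 powr 3" by simp
    then have "(8::real) powr (1/3) = (2 powr 3) powr (1/3)" by simp
    also have "\<dots> = 2 powr (3 * (1/3))" by (simp add: powr_powr)
    finally show ?thesis by simp
  qed
  have "d powr (1/3) \<ge> 8 powr (1/3)" using d by (intro powr_mono2) auto
  then have h2: "d powr (1/3) \<ge> 2" using e8 by simp
  have "d = d powr (1/3 + 2/3)" using dp by simp
  also have "\<dots> = d powr (1/3) * d powr (2/3)" by (rule powr_add)
  finally have "d = d powr (1/3) * d powr (2/3)" .
  moreover have "d powr (1/3) * d powr (2/3) \<ge> 2 * d powr (2/3)" using h2 by (intro mult_right_mono) auto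
  ultimately show ?thesis by linarith
qed

lemma final_main:
  fixes \<beta> c :: real
  assumes h\<beta>: "\<beta> \<ge> TT" and c: "0 < c" "c \<le> 1"
  shows "\<exists>N::nat. \<forall>n\<ge>N. \<forall>p::real. 0 \<le> p \<and> p \<le> 1 \<and> real n * p \<ge> max (1 / c\<^sup>2) (\<beta>\<^sup>2) * sqrt (real n) \<longrightarrow>
         (\<forall>v \<sigma>0 \<Gamma>. v \<in> Vn n \<longrightarrow>
            (\<forall>u\<in>Vn n. \<sigma>0 u \<in> {-1, 1}) \<longrightarrow>
            (\<Sum>u\<in>Vn n. \<sigma>0 u) = phi n (2 * c * sqrt (real n)) \<longrightarrow>
            \<Gamma> \<subseteq> Vn n - {v} \<longrightarrow>
            \<bar>real (card \<Gamma>) - real n * p\<bar> \<le> (real n * p) powr (2/3) \<longrightarrow>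
            gnp_P n p (\<lambda>E. nbhd E v = \<Gamma>) > 0 \<longrightarrow>
            gnp_cond_exp n p (\<lambda>E. X2 E \<sigma>0 v) (\<lambda>E. nbhd E v = \<Gamma>)
              \<ge> real (card \<Gamma>) / 2 + (7 * kap0 / 2) * c / 7 * sqrt ((real n * p) ^ 3 / real n))"
proof -
  define K where "K = 32 * TT^2 + 1"
  have T448: "TT \<ge> 448" by (rule TT_ge)
  have "TT * TT \<ge> 448 * 1" using T448 by (intro mult_mono) auto
  then have K449: "K \<ge> 449" unfolding K_def by (simp add: power2_eq_square)
  define N where "N = nat \<lceil>(K / c)^2\<rceil>"
  show ?thesis
  proof (intro exI[of _ N] allI impI)
    fix n p v and \<sigma>0 :: "nat \<Rightarrow> int" and \<Gamma>
    assume nN: "N \<le> n"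
    assume hp: "0 \<le> p \<and> p \<le> 1 \<and> real n * p \<ge> max (1 / c\<^sup>2) (\<beta>\<^sup>2) * sqrt (real n)"
    assume v: "v \<in> Vn n" and s: "\<forall>u\<in>Vn n. \<sigma>0 u \<in> {-1, 1}"
        and S: "(\<Sum>u\<in>Vn n. \<sigma>0 u) = phi n (2 * c * sqrt (real n))"
        and \<Gamma>: "\<Gamma> \<subseteq> Vn n - {v}" and cG: "\<bar>real (card \<Gamma>) - real n * p\<bar> \<le> (real n * p) powr (2/3)"
        and D: "gnp_P n p (\<lambda>E. nbhd E v = \<Gamma>) > 0"
    define lam where "lam = max (1 / c\<^sup>2) (\<beta>\<^sup>2)"
    have p01: "0 \<le> p" "p \<le> 1" using hp by auto
    have np: "real n * p \<ge> lam * sqrt (real n)" using hp unfolding lam_def by auto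
    have Kc: "K / c > 0" using K449 c by simp
    have "real n \<ge> (K / c)^2"
    proof -
      have "real N \<ge> (K / c)^2" unfolding N_def by (simp add: real_nat_ceiling_ge)
      then show ?thesis using nN by linarith
    qed
    then have "sqrt (real n) \<ge> sqrt ((K / c)^2)" by (rule real_sqrt_le_mono)
    then have snK: "sqrt (real n) \<ge> K / c" using Kc K449 c by simp
    have cn: "c * sqrt (real n) \<ge> K" using snK c by (simp add: field_simps)
    have sn0: "sqrt (real n) > 0" using snK Kc by linarith
    have nsq: "sqrt (real n) * sqrt (real n) = real n" by simp
    have lam1: "lam \<ge> 1 / c^2" unfolding lam_def by simp
    have c2: "c^2 \<le> 1" using c by (simp add: power_le_one)
    have lam_ge1: "lam \<ge> 1"
    proof -
      have "1 / c^2 \<ge> 1" using c2 c by (simp add: field_simps)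
      then show ?thesis using lam1 by linarith
    qed
    have lamb: "lam \<ge> \<beta> / c"
    proof (cases "\<beta> \<le> 1 / c")
      case True
      then have a: "\<beta> / c \<le> (1 / c) / c" using c by (intro divide_right_mono) auto
      have b: "(1 / c) / c = 1 / c^2" by (simp add: power2_eq_square)
      show ?thesis using a b lam1 by linarith
    next
      case False
      then have "\<beta> / c < \<beta> * \<beta>" using c h\<beta> T448 by (simp add: field_simps)
      then show ?thesis unfolding lam_def by (simp add: power2_eq_square)
    qed
    have psn: "p * sqrt (real n) \<ge> lam"
    proof -
      have "lam * sqrt (real n) \<le> (p * sqrt (real n)) * sqrt (real n)" using np nsq by (simp add: mult_ac)
      then show ?thesis using sn0 by simp
    qed
    have hp1: "p * sqrt (real n) \<ge> 1" using psn lam_ge1 by linarith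
    have ppos: "p > 0" using hp1 sn0 by (smt (verit) mult_nonpos_nonneg)
    have hA: "p * c * sqrt (real n) \<ge> TT"
    proof -
      have "c * (p * sqrt (real n)) \<ge> c * (\<beta> / c)" using psn lamb c by (intro mult_left_mono) auto
      then show ?thesis using c h\<beta> by (simp add: mult_ac)
    qed
    have hn: "c * sqrt (real n) \<ge> 32 * TT^2 + 1" using cn unfolding K_def .
      define d where "d = real n * p"
      have S1: "real_of_int (\<Sum>w\<in>Vn n. \<sigma>0 w) \<ge> 2 * c * sqrt (real n)"
        and S2: "real_of_int (\<Sum>w\<in>Vn n. \<sigma>0 w) < 2 * c * sqrt (real n) + 2"
        using phi_props[where n=n and x="2 * c * sqrt (real n)"] unfolding S by auto
      have each: "G p (card {w\<in>Vn n - {u, v}. \<sigma>0 w = 1}) (card {w\<in>Vn n - {u, v}. \<sigma>0 w = -1}) \<ge> 1/2 + kap0 * c * sqrt p"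
        if "u \<in> \<Gamma>" for u
        using per_u[OF c hn ppos p01(2) hA hp1 v _ _ s S1 S2] that \<Gamma> by auto
      have A: "gnp_cond_exp n p (\<lambda>E. X2 E \<sigma>0 v) (\<lambda>E. nbhd E v = \<Gamma>) \<ge>
         (\<Sum>u\<in>\<Gamma>. G p (card {w\<in>Vn n - {u, v}. \<sigma>0 w = 1}) (card {w\<in>Vn n - {u, v}. \<sigma>0 w = -1}))"
        by (rule cond_exp_bound[OF v \<Gamma> p01 s D])
      have B: "(\<Sum>u\<in>\<Gamma>. G p (card {w\<in>Vn n - {u, v}. \<sigma>0 w = 1}) (card {w\<in>Vn n - {u, v}. \<sigma>0 w = -1}))
          \<ge> (\<Sum>u\<in>\<Gamma>. 1/2 + kap0 * c * sqrt p)" using each by (intro sum_mono) auto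
      from order_trans[OF B A] have L: "gnp_cond_exp n p (\<lambda>E. X2 E \<sigma>0 v) (\<lambda>E. nbhd E v = \<Gamma>) \<ge> real (card \<Gamma>) * (1/2 + kap0 * c * sqrt p)"
        by simp
      have d8: "d \<ge> 8"
      proof -
        have "sqrt (real n) \<ge> 449"
        proof -
          have "c * sqrt (real n) \<le> sqrt (real n)" using c by (intro mult_left_le_one_le) auto
          then show ?thesis using cn K449 by linarith
        qed
        moreover have "d \<ge> lam * sqrt (real n)" using np unfolding d_def .
        moreover have "lam * sqrt (real n) \<ge> 1 * sqrt (real n)" using lam_ge1 sn0 by (intro mult_right_mono) auto
        ultimately show ?thesis by linarith
      qed
      have cGd: "real (card \<Gamma>) \<ge> d / 2" using powr23[OF d8] cG unfolding d_def by linarith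
      have sq: "sqrt (d ^ 3 / real n) = d * sqrt p"
      proof -
        have nz: "real n > 0" using sn0 by simp
        have "d ^ 3 / real n = d^2 * p" unfolding d_def using nz by (simp add: power3_eq_cube power2_eq_square)
        then show ?thesis using d8 ppos by (simp add: real_sqrt_mult)
      qed
      have k0: "kap0 * c * sqrt p \<ge> 0" using kapL_pos c ppos unfolding kap0_def by simp
      have "real (card \<Gamma>) * (kap0 * c * sqrt p) \<ge> (d / 2) * (kap0 * c * sqrt p)"
        using cGd k0 by (intro mult_right_mono) auto
      then have "real (card \<Gamma>) * (1/2 + kap0 * c * sqrt p) \<ge> real (card \<Gamma>) / 2 + (7 * kap0 / 2) * c / 7 * (d * sqrt p)"
        by (simp add: algebra_simps)
      then show "gnp_cond_exp n p (\<lambda>E. X2 E \<sigma>0 v) (\<lambda>E. nbhd E v = \<Gamma>)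
              \<ge> real (card \<Gamma>) / 2 + (7 * kap0 / 2) * c / 7 * sqrt ((real n * p) ^ 3 / real n)"
        using L sq unfolding d_def by simp
  qed
qed


theorem lemma3p5:
  shows "\<exists>\<beta>0::real. \<forall>\<beta>\<ge>\<beta>0. \<exists>\<xi>::real. \<xi> > 0 \<and>
    (\<forall>\<epsilon>::real. 0 < \<epsilon> \<and> \<epsilon> \<le> 1 \<longrightarrow>
      (let c = sqrt (2 * pi) * \<epsilon> / 20; lam = max (1 / c\<^sup>2) (\<beta>\<^sup>2) in
       \<exists>N::nat. \<forall>n\<ge>N. \<forall>p::real. 0 \<le> p \<and> p \<le> 1 \<and> real n * p \<ge> lam * sqrt (real n) \<longrightarrow>
         (let d = real n * p in
          \<forall>v \<sigma>0 \<Gamma>. v \<in> Vn n \<longrightarrow>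
            (\<forall>u\<in>Vn n. \<sigma>0 u \<in> {-1, 1}) \<longrightarrow>
            (\<Sum>u\<in>Vn n. \<sigma>0 u) = phi n (2 * c * sqrt (real n)) \<longrightarrow>
            \<Gamma> \<subseteq> Vn n - {v} \<longrightarrow>
            \<bar>real (card \<Gamma>) - d\<bar> \<le> d powr (2/3) \<longrightarrow>
            gnp_P n p (\<lambda>E. nbhd E v = \<Gamma>) > 0 \<longrightarrow>
            gnp_cond_exp n p (\<lambda>E. X2 E \<sigma>0 v) (\<lambda>E. nbhd E v = \<Gamma>)
              \<ge> real (card \<Gamma>) / 2 + \<xi> * c / 7 * sqrt (d ^ 3 / real n))))"
  apply (rule exI[of _ TT])
  apply (intro allI impI)
  apply (rule exI[of _ "7 * kap0 / 2"])
  apply (rule conjI)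
   apply (simp add: kap0_def kapL_pos)
  apply (intro allI impI)
  apply (unfold Let_def)
  apply (rule final_main)
    apply assumption
   apply simp
proof -
  fix \<epsilon> :: real assume e: "0 < \<epsilon> \<and> \<epsilon> \<le> 1"
  have "2 * pi \<le> 20^2" using pi_less_4 by simp
  then have "sqrt (2 * pi) \<le> sqrt (20^2)" by (rule real_sqrt_le_mono)
  then have s20: "sqrt (2 * pi) \<le> 20" by simp
  have "sqrt (2 * pi) * \<epsilon> \<le> 20 * 1" using e s20 by (intro mult_mono) auto
  then show "sqrt (2 * pi) * \<epsilon> / 20 \<le> 1" by simp
qed

end
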